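(* Let $c_k\in(0,1)$, $l_k>0$ decreasing to $0$, $I_k$ the open interval of length $l_k$ centered at $c_k$, and assume (A1), (A2), (A3) below. Let $f\in C([0,1])$ and $\mu_k=\frac{1}{|I_k|}f(x)\,dx|_{I_k}$ (with $dx$ Lebesgue measure restricted to $[0,1]$). Then, as $n\to\infty$, $$\frac{1}{(\#\mathcal{A}_n)^2}\sum_{i,j\in\mathcal{A}_n,\,i\ne j}I(\mu_i,\mu_j)=I(f(x)\phi(x)\,dx)+o(1).$$
   Context: $I(\nu,\mu)=\iint(-\log|z-w|)\,d\nu(z)\,d\mu(w)$, $I(\mu)=I(\mu,\mu)$. Notation: $\mathcal{A}_n=\{n,\dots,2n-1\}$, $\mathcal{A}_{n,q}=\mathcal{A}_n\cup\mathcal{A}_{2n}\cup\cdots\cup\mathcal{A}_{2^qn}$. (A1) There is $\phi\in L^1([0,1],dx)$, $\phi>0$ a.e., with $\frac{1}{\#\mathcal{A}_n}\sum_{k\in\mathcal{A}_n}g(c_k)\to\int_0^1 g\phi\,dx$ for every $g\in C([0,1])$; $\phi$ in the claim is this function. There are integers $q(n)\to\infty$ such that: (A2) for every $\varepsilon>0$ there is $\delta>0$ such that for all large $n$ and all $n',n''\in\{n,2n,\dots,2^{q(n)}n\}$, $\frac{1}{\#(\mathcal{A}_{n'}\times\mathcal{A}_{n''})}\sum_{i\in\mathcal{A}_{n'},j\in\mathcal{A}_{n''},\,i\neq j,\,|c_i-c_j|<\delta}(-\log|c_i-c_j|)<\varepsilon$; (A3) for every $\varepsilon>0$, for all large $n$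 and all $i\ne j$ in $\mathcal{A}_{n,q(n)}$, $\frac{l_i+l_j}{2|c_i-c_j|}<\varepsilon$. *)

theory Defs
  imports "HOL-Analysis.Analysis"
begin

text \<open>Logarithmic mutual energy of two (signed) measures on the real line given by
  their densities g and h with respect to Lebesgue measure:
  I(g dx, h dx) = double integral of -log|x-y| g(x) h(y) dx dy.\<close>
definition log_energy :: "(real \<Rightarrow> real) \<Rightarrow> (real \<Rightarrow> real) \<Rightarrow> real" where
  "log_energy g h =
     integral\<^sup>L (lborel \<Otimes>\<^sub>M lborel) (\<lambda>(x, y). - ln \<bar>x - y\<bar> * g x * h y)"

definition blockA :: "nat \<Rightarrow> nat set" where
  "blockA n = {n..<2 * n}"

definition blockAq :: "nat \<Rightarrow> nat \<Rightarrow> nat set" where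
  "blockAq n q = (\<Union>m\<in>{..q}. blockA (2 ^ m * n))"

definition centred_interval :: "real \<Rightarrow> real \<Rightarrow> real set" where
  "centred_interval c l = {c - l / 2 <..< c + l / 2}"

definition mu_density :: "(real \<Rightarrow> real) \<Rightarrow> real \<Rightarrow> real \<Rightarrow> real \<Rightarrow> real" where
  "mu_density f c l x = indicator (centred_interval c l \<inter> {0..1}) x * f x / l"

end

theory Submission
  imports Defs
begin

lemma pair_lborel: "pair_sigma_finite lborel lborel"
  by (simp add: lborel.sigma_finite_measure_axioms pair_sigma_finite.intro)

lemma prod_integrable:
  fixes g h :: "real \<Rightarrow> real"
  assumes g: "integrable lborel g" and h: "integrable lborel h"
  shows "integrable (lborel \<Otimes>\<^sub>M lborel) (\<lambda>(x,y). g x * h y)"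
    and "integral\<^sup>L (lborel \<Otimes>\<^sub>M lborel) (\<lambda>(x,y). g x * h y) = integral\<^sup>L lborel g * integral\<^sup>L lborel h"
proof -
  interpret P: pair_sigma_finite lborel lborel by (rule pair_lborel)
  have m: "(\<lambda>(x,y). g x * h y) \<in> borel_measurable (lborel \<Otimes>\<^sub>M lborel)"
    using g h by measurable
  show I: "integrable (lborel \<Otimes>\<^sub>M lborel) (\<lambda>(x,y). g x * h y)"
  proof (rule pair_sigma_finite.Fubini_integrable[OF pair_lborel m])
    have "(\<lambda>x. \<integral>y. norm (case (x, y) of (x, y) \<Rightarrow> g x * h y) \<partial>lborel) = (\<lambda>x. norm (g x) * (\<integral>y. norm (h y) \<partial>lborel))"
      by (simp add: abs_mult)
    then show "integrable lborel (\<lambda>x. \<integral>y. norm (case (x, y) of (x, y) \<Rightarrow> g x * h y) \<partial>lborel)"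
      using g by (simp add: integrable_norm)
    show "AE x in lborel. integrable lborel (\<lambda>y. case (x, y) of (x, y) \<Rightarrow> g x * h y)"
      using h by simp
  qed
  have "integral\<^sup>L (lborel \<Otimes>\<^sub>M lborel) (\<lambda>(x,y). g x * h y) = (\<integral>x. (\<integral>y. g x * h y \<partial>lborel) \<partial>lborel)"
    using pair_sigma_finite.integral_fst[OF pair_lborel, of "\<lambda>x y. g x * h y"] I by simp
  also have "\<dots> = integral\<^sup>L lborel g * integral\<^sup>L lborel h"
    by simp
  finally show "integral\<^sup>L (lborel \<Otimes>\<^sub>M lborel) (\<lambda>(x,y). g x * h y) = integral\<^sup>L lborel g * integral\<^sup>L lborel h" .
qed

lemma kernel_bound:
  fixes K :: "real \<times> real \<Rightarrow> real" and g h :: "real \<Rightarrow> real"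
  assumes g: "integrable lborel g" and h: "integrable lborel h"
    and K: "K \<in> borel_measurable (lborel \<Otimes>\<^sub>M lborel)" and B: "B \<ge> 0"
    and bnd: "\<And>x y. g x \<noteq> 0 \<Longrightarrow> h y \<noteq> 0 \<Longrightarrow> \<bar>K (x,y)\<bar> \<le> B"
  shows "integrable (lborel \<Otimes>\<^sub>M lborel) (\<lambda>(x,y). K (x,y) * g x * h y)"
    and "\<bar>integral\<^sup>L (lborel \<Otimes>\<^sub>M lborel) (\<lambda>(x,y). K (x,y) * g x * h y)\<bar>
          \<le> B * integral\<^sup>L lborel (\<lambda>x. \<bar>g x\<bar>) * integral\<^sup>L lborel (\<lambda>x. \<bar>h x\<bar>)"
proof -
  have ga: "integrable lborel (\<lambda>x. \<bar>g x\<bar>)" using g by auto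
  have ha: "integrable lborel (\<lambda>x. \<bar>h x\<bar>)" using h by auto
  note D0 = prod_integrable[OF ga ha]
  have D: "integrable (lborel \<Otimes>\<^sub>M lborel) (\<lambda>z. B * (case z of (x,y) \<Rightarrow> \<bar>g x\<bar> * \<bar>h y\<bar>))"
    using D0(1) by (rule integrable_mult_right)
  have pt: "\<bar>(case z of (x,y) \<Rightarrow> K (x,y) * g x * h y)\<bar> \<le> B * (case z of (x,y) \<Rightarrow> \<bar>g x\<bar> * \<bar>h y\<bar>)" for z
  proof (cases z)
    case (Pair x y)
    show ?thesis
    proof (cases "g x = 0 \<or> h y = 0")
      case True then show ?thesis using Pair B by auto
    next
      case False
      then have "\<bar>K (x,y)\<bar> \<le> B" using bnd by auto
      then have "\<bar>K (x,y)\<bar> * (\<bar>g x\<bar> * \<bar>h y\<bar>) \<le> B * (\<bar>g x\<bar> * \<bar>h y\<bar>)"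
        by (intro mult_right_mono) auto
      then show ?thesis using Pair by (simp add: abs_mult mult.assoc)
    qed
  qed
  have m: "(\<lambda>(x,y). K (x,y) * g x * h y) \<in> borel_measurable (lborel \<Otimes>\<^sub>M lborel)"
    using K g h by measurable
  show I: "integrable (lborel \<Otimes>\<^sub>M lborel) (\<lambda>(x,y). K (x,y) * g x * h y)"
    apply (rule Bochner_Integration.integrable_bound[OF D m])
    using pt B by (auto intro!: AE_I2 simp: split_beta)
  have "\<bar>integral\<^sup>L (lborel \<Otimes>\<^sub>M lborel) (\<lambda>(x,y). K (x,y) * g x * h y)\<bar>
     \<le> integral\<^sup>L (lborel \<Otimes>\<^sub>M lborel) (\<lambda>z. \<bar>(case z of (x,y) \<Rightarrow> K (x,y) * g x * h y)\<bar>)"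
    by (rule integral_abs_bound)
  also have "\<dots> \<le> integral\<^sup>L (lborel \<Otimes>\<^sub>M lborel) (\<lambda>z. B * (case z of (x,y) \<Rightarrow> \<bar>g x\<bar> * \<bar>h y\<bar>))"
    by (intro integral_mono D pt) (use I in auto)
  also have "\<dots> = B * integral\<^sup>L lborel (\<lambda>x. \<bar>g x\<bar>) * integral\<^sup>L lborel (\<lambda>x. \<bar>h x\<bar>)"
    using D0(2) by simp
  finally show "\<bar>integral\<^sup>L (lborel \<Otimes>\<^sub>M lborel) (\<lambda>(x,y). K (x,y) * g x * h y)\<bar>
          \<le> B * integral\<^sup>L lborel (\<lambda>x. \<bar>g x\<bar>) * integral\<^sup>L lborel (\<lambda>x. \<bar>h x\<bar>)" .
qed

lemma cont_meas2:
  fixes G :: "real \<times> real \<Rightarrow> real"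
  assumes "continuous_on UNIV G"
  shows "G \<in> borel_measurable (lborel \<Otimes>\<^sub>M lborel)"
proof -
  have "G \<in> borel_measurable borel" using assms by (rule borel_measurable_continuous_onI)
  then show ?thesis by (simp add: lborel_prod measurable_lborel1)
qed

lemma cont_meas1:
  fixes g :: "real \<Rightarrow> real"
  assumes "continuous_on UNIV g"
  shows "g \<in> borel_measurable lborel"
  using assms borel_measurable_continuous_onI by simp

lemma card_blockA[simp]: "card (blockA n) = n"
  by (simp add: blockA_def)

lemma kernel1:
  fixes g h :: "real \<Rightarrow> real"
  assumes h: "integrable lborel h" and g: "g \<in> borel_measurable lborel" and B: "B \<ge> 0"
    and bnd: "\<And>x. h x \<noteq> 0 \<Longrightarrow> \<bar>g x\<bar> \<le> B"
  shows "integrable lborel (\<lambda>x. g x * h x)"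
    and "\<bar>integral\<^sup>L lborel (\<lambda>x. g x * h x)\<bar> \<le> B * integral\<^sup>L lborel (\<lambda>x. \<bar>h x\<bar>)"
proof -
  have D: "integrable lborel (\<lambda>x. B * \<bar>h x\<bar>)" using h by auto
  have pt: "\<bar>g x * h x\<bar> \<le> B * \<bar>h x\<bar>" for x
    using bnd[of x] by (cases "h x = 0") (auto simp: abs_mult intro: mult_right_mono)
  show I: "integrable lborel (\<lambda>x. g x * h x)"
    apply (rule Bochner_Integration.integrable_bound[OF D])
    using g h pt B by auto
  have "\<bar>integral\<^sup>L lborel (\<lambda>x. g x * h x)\<bar> \<le> integral\<^sup>L lborel (\<lambda>x. \<bar>g x * h x\<bar>)"
    by (rule integral_abs_bound)
  also have "\<dots> \<le> integral\<^sup>L lborel (\<lambda>x. B * \<bar>h x\<bar>)"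
    by (intro integral_mono D pt) (use I in auto)
  also have "\<dots> = B * integral\<^sup>L lborel (\<lambda>x. \<bar>h x\<bar>)" by simp
  finally show "\<bar>integral\<^sup>L lborel (\<lambda>x. g x * h x)\<bar> \<le> B * integral\<^sup>L lborel (\<lambda>x. \<bar>h x\<bar>)" .
qed

lemma cont_bound01:
  fixes g :: "real \<Rightarrow> real"
  assumes "continuous_on UNIV g"
  obtains B where "B \<ge> 0" "\<And>x. x \<in> {0..1} \<Longrightarrow> \<bar>g x\<bar> \<le> B"
proof -
  have "compact (g ` {0..1})"
    using assms by (intro compact_continuous_image) (auto intro: continuous_on_subset)
  then obtain B where "\<forall>y\<in>g ` {0..1}. norm y \<le> B" using compact_imp_bounded bounded_iff by metis
  then show ?thesis using that[of "\<bar>B\<bar>"] by force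
qed

lemma cont_bound_sq:
  fixes G :: "real \<times> real \<Rightarrow> real"
  assumes "continuous_on UNIV G"
  obtains B where "B \<ge> 0" "\<And>x y. x \<in> {0..1} \<Longrightarrow> y \<in> {0..1} \<Longrightarrow> \<bar>G (x,y)\<bar> \<le> B"
proof -
  have "compact (G ` ({0..1} \<times> {0..1}))"
    using assms by (intro compact_continuous_image compact_Times) (auto intro: continuous_on_subset)
  then obtain B where "\<forall>y\<in>G ` ({0..1} \<times> {0..1}). norm y \<le> B" using compact_imp_bounded bounded_iff by metis
  then show ?thesis using that[of "\<bar>B\<bar>"] by force
qed

locale eqd =
  fixes c :: "nat \<Rightarrow> real" and \<Phi> :: "real \<Rightarrow> real"
  assumes c01: "\<And>k. c k \<in> {0..1}"
    and \<Phi>int: "integrable lborel \<Phi>"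
    and \<Phi>0: "\<And>x. x \<notin> {0..1} \<Longrightarrow> \<Phi> x = 0"
    and A1: "\<And>g. continuous_on UNIV g \<Longrightarrow>
       (\<lambda>n. (\<Sum>k\<in>blockA n. g (c k)) / real n) \<longlonglongrightarrow> integral\<^sup>L lborel (\<lambda>x. g x * \<Phi> x)"
begin

definition Sn :: "(real \<times> real \<Rightarrow> real) \<Rightarrow> nat \<Rightarrow> real" where
  "Sn G n = (\<Sum>(i,j)\<in>blockA n \<times> blockA n. G (c i, c j)) / real n ^ 2"

definition T :: "(real \<times> real \<Rightarrow> real) \<Rightarrow> real" where
  "T G = integral\<^sup>L (lborel \<Otimes>\<^sub>M lborel) (\<lambda>(x,y). G (x,y) * \<Phi> x * \<Phi> y)"

definition PhiA where "PhiA = integral\<^sup>L lborel (\<lambda>x. \<bar>\<Phi> x\<bar>)"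

lemma PhiA_nonneg: "PhiA \<ge> 0"
  unfolding PhiA_def by simp

lemma Phi_nz: "\<Phi> x \<noteq> 0 \<Longrightarrow> x \<in> {0..1}"
  using \<Phi>0 by blast

lemma T_integrable:
  assumes "continuous_on UNIV G"
  shows "integrable (lborel \<Otimes>\<^sub>M lborel) (\<lambda>(x,y). G (x,y) * \<Phi> x * \<Phi> y)"
proof -
  obtain B where B: "B \<ge> 0" "\<And>x y. x \<in> {0..1} \<Longrightarrow> y \<in> {0..1} \<Longrightarrow> \<bar>G (x,y)\<bar> \<le> B"
    using cont_bound_sq[OF assms] by blast
  show ?thesis
    by (rule kernel_bound(1)[OF \<Phi>int \<Phi>int cont_meas2[OF assms] B(1)]) (use B(2) Phi_nz in blast)
qed

lemma T_diff_bound: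
  assumes "continuous_on UNIV G" "e \<ge> 0" "\<And>x y. x \<in> {0..1} \<Longrightarrow> y \<in> {0..1} \<Longrightarrow> \<bar>G (x,y)\<bar> \<le> e"
  shows "\<bar>T G\<bar> \<le> e * PhiA * PhiA"
  unfolding T_def PhiA_def
  by (rule kernel_bound(2)[OF \<Phi>int \<Phi>int cont_meas2[OF assms(1)] assms(2)]) (use assms(3) Phi_nz in blast)

lemma T_add:
  assumes "continuous_on UNIV F" "continuous_on UNIV G"
  shows "T (\<lambda>z. F z + G z) = T F + T G"
proof -
  have "T (\<lambda>z. F z + G z) = integral\<^sup>L (lborel \<Otimes>\<^sub>M lborel)
      (\<lambda>z. (case z of (x,y) \<Rightarrow> F (x,y) * \<Phi> x * \<Phi> y) + (case z of (x,y) \<Rightarrow> G (x,y) * \<Phi> x * \<Phi> y))"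
    unfolding T_def by (intro Bochner_Integration.integral_cong refl) (auto simp: algebra_simps split: prod.splits)
  also have "\<dots> = T F + T G"
    unfolding T_def by (rule Bochner_Integration.integral_add[OF T_integrable[OF assms(1)] T_integrable[OF assms(2)]])
  finally show ?thesis .
qed

lemma T_diff:
  assumes "continuous_on UNIV F" "continuous_on UNIV G"
  shows "T (\<lambda>z. F z - G z) = T F - T G"
proof -
  have "T (\<lambda>z. F z - G z) = integral\<^sup>L (lborel \<Otimes>\<^sub>M lborel)
      (\<lambda>z. (case z of (x,y) \<Rightarrow> F (x,y) * \<Phi> x * \<Phi> y) - (case z of (x,y) \<Rightarrow> G (x,y) * \<Phi> x * \<Phi> y))"
    unfolding T_def by (intro Bochner_Integration.integral_cong refl) (auto simp: algebra_simps split: prod.splits)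
  also have "\<dots> = T F - T G"
    unfolding T_def by (rule Bochner_Integration.integral_diff[OF T_integrable[OF assms(1)] T_integrable[OF assms(2)]])
  finally show ?thesis .
qed

lemma Sn_add: "Sn (\<lambda>z. F z + G z) n = Sn F n + Sn G n"
  unfolding Sn_def by (simp add: sum.distrib split_beta add_divide_distrib)

lemma Sn_diff: "Sn (\<lambda>z. F z - G z) n = Sn F n - Sn G n"
  unfolding Sn_def by (simp add: sum_subtractf split_beta diff_divide_distrib)

lemma Sn_bound:
  assumes "e \<ge> 0" "\<And>x y. x \<in> {0..1} \<Longrightarrow> y \<in> {0..1} \<Longrightarrow> \<bar>G (x,y)\<bar> \<le> e"
  shows "\<bar>Sn G n\<bar> \<le> e"
proof (cases "n = 0")
  case True then show ?thesis using assms by (simp add: Sn_def)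
next
  case False
  have "\<bar>\<Sum>(i,j)\<in>blockA n \<times> blockA n. G (c i, c j)\<bar> \<le> (\<Sum>(i,j)\<in>blockA n \<times> blockA n. e)"
    by (rule order_trans[OF sum_abs]) (intro sum_mono, use assms(2) c01 in auto)
  also have "\<dots> = e * real n ^ 2" by (simp add: power2_eq_square card_cartesian_product)
  finally have "\<bar>\<Sum>(i,j)\<in>blockA n \<times> blockA n. G (c i, c j)\<bar> / real n ^ 2 \<le> e"
    using False by (simp add: divide_le_eq)
  then show ?thesis by (simp add: Sn_def)
qed

lemma Sn_prod: "Sn (\<lambda>z. u (fst z) * v (snd z)) n =
   ((\<Sum>k\<in>blockA n. u (c k)) / real n) * ((\<Sum>k\<in>blockA n. v (c k)) / real n)"
proof -
  have "(\<Sum>(i,j)\<in>blockA n \<times> blockA n. u (c i) * v (c j)) = (\<Sum>k\<in>blockA n. u (c k)) * (\<Sum>k\<in>blockA n. v (c k))"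
    by (simp add: sum_product sum.cartesian_product)
  then show ?thesis by (simp add: Sn_def power2_eq_square)
qed

lemma prod_conv:
  assumes u: "continuous_on UNIV u" and v: "continuous_on UNIV v"
  shows "(\<lambda>n. Sn (\<lambda>z. u (fst z) * v (snd z)) n) \<longlonglongrightarrow> T (\<lambda>z. u (fst z) * v (snd z))"
proof -
  obtain Bu where Bu: "Bu \<ge> 0" "\<And>x. x \<in> {0..1} \<Longrightarrow> \<bar>u x\<bar> \<le> Bu" using cont_bound01[OF u] by blast
  obtain Bv where Bv: "Bv \<ge> 0" "\<And>x. x \<in> {0..1} \<Longrightarrow> \<bar>v x\<bar> \<le> Bv" using cont_bound01[OF v] by blast
  have iu: "integrable lborel (\<lambda>x. u x * \<Phi> x)"
    by (rule kernel1(1)[OF \<Phi>int cont_meas1[OF u] Bu(1)]) (use Bu(2) Phi_nz in blast)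
  have iv: "integrable lborel (\<lambda>x. v x * \<Phi> x)"
    by (rule kernel1(1)[OF \<Phi>int cont_meas1[OF v] Bv(1)]) (use Bv(2) Phi_nz in blast)
  have "T (\<lambda>z. u (fst z) * v (snd z)) = integral\<^sup>L (lborel \<Otimes>\<^sub>M lborel) (\<lambda>(x,y). (u x * \<Phi> x) * (v y * \<Phi> y))"
    unfolding T_def by (intro Bochner_Integration.integral_cong refl) (auto simp: algebra_simps split: prod.splits)
  also have "\<dots> = integral\<^sup>L lborel (\<lambda>x. u x * \<Phi> x) * integral\<^sup>L lborel (\<lambda>x. v x * \<Phi> x)"
    by (rule prod_integrable(2)[OF iu iv])
  finally have eq: "T (\<lambda>z. u (fst z) * v (snd z)) = \<dots>" .
  show ?thesis unfolding eq Sn_prod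
    by (intro tendsto_mult A1 u v)
qed

lemma cont_prodfun:
  fixes u v :: "real \<Rightarrow> real"
  assumes u: "continuous_on UNIV u" and v: "continuous_on UNIV v"
  shows "continuous_on UNIV (\<lambda>z::real\<times>real. u (fst z) * v (snd z))"
proof -
  have "continuous_on UNIV (\<lambda>z::real\<times>real. u (fst z))"
    by (rule continuous_on_compose2[OF u continuous_on_fst[OF continuous_on_id]]) auto
  moreover have "continuous_on UNIV (\<lambda>z::real\<times>real. v (snd z))"
    by (rule continuous_on_compose2[OF v continuous_on_snd[OF continuous_on_id]]) auto
  ultimately show ?thesis by (rule continuous_on_mult)
qed

definition Rset :: "(real \<times> real \<Rightarrow> real) set" where
  "Rset = {F. \<exists>L. (\<forall>p\<in>set L. continuous_on UNIV (fst p) \<and> continuous_on UNIV (snd p)) \<and>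
               F = (\<lambda>z. \<Sum>p\<leftarrow>L. fst p (fst z) * snd p (snd z))}"

lemma list_cont:
  fixes L :: "((real \<Rightarrow> real) \<times> (real \<Rightarrow> real)) list"
  assumes "\<forall>p\<in>set L. continuous_on UNIV (fst p) \<and> continuous_on UNIV (snd p)"
  shows "continuous_on UNIV (\<lambda>z::real\<times>real. \<Sum>p\<leftarrow>L. fst p (fst z) * snd p (snd z))"
  using assms
proof (induction L)
  case Nil then show ?case by simp
next
  case (Cons p L)
  have "continuous_on UNIV (\<lambda>z::real\<times>real. fst p (fst z) * snd p (snd z))"
    by (rule cont_prodfun) (use Cons.prems in auto)
  then show ?case using Cons by (simp add: continuous_on_add)
qed

lemma list_conv:
  fixes L :: "((real \<Rightarrow> real) \<times> (real \<Rightarrow> real)) list"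
  assumes "\<forall>p\<in>set L. continuous_on UNIV (fst p) \<and> continuous_on UNIV (snd p)"
  shows "(\<lambda>n. Sn (\<lambda>z. \<Sum>p\<leftarrow>L. fst p (fst z) * snd p (snd z)) n) \<longlonglongrightarrow> T (\<lambda>z. \<Sum>p\<leftarrow>L. fst p (fst z) * snd p (snd z))"
  using assms
proof (induction L)
  case Nil
  have "(\<lambda>(x,y). 0 * \<Phi> x * \<Phi> y) = (\<lambda>z::real\<times>real. 0::real)" by auto
  then have "T (\<lambda>z. 0) = 0" by (simp add: T_def)
  moreover have "Sn (\<lambda>z. 0) n = 0" for n by (simp add: Sn_def)
  ultimately show ?case by simp
next
  case (Cons p L)
  have cp: "continuous_on UNIV (\<lambda>z::real\<times>real. fst p (fst z) * snd p (snd z))"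
    by (rule cont_prodfun) (use Cons.prems in auto)
  have cL: "continuous_on UNIV (\<lambda>z::real\<times>real. \<Sum>p\<leftarrow>L. fst p (fst z) * snd p (snd z))"
    using Cons.prems by (intro list_cont) auto
  have e1: "(\<lambda>z. \<Sum>p\<leftarrow>p # L. fst p (fst z) * snd p (snd z)) =
     (\<lambda>z. fst p (fst z) * snd p (snd z) + (\<Sum>p\<leftarrow>L. fst p (fst z) * snd p (snd z)))" by simp
  show ?case unfolding e1 Sn_add T_add[OF cp cL]
    apply (intro tendsto_add prod_conv Cons.IH)
    using Cons.prems by auto
qed

lemma Rset_conv: "F \<in> Rset \<Longrightarrow> continuous_on UNIV F \<and> (\<lambda>n. Sn F n) \<longlonglongrightarrow> T F"
  unfolding Rset_def using list_cont list_conv by blast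

lemma sum_list_mult_lists:
  fixes f :: "'a \<Rightarrow> real" and g :: "'b \<Rightarrow> real"
  shows
  "(\<Sum>p\<leftarrow>L1. f p) * (\<Sum>q\<leftarrow>L2. g q) = (\<Sum>r\<leftarrow>concat (map (\<lambda>p. map (\<lambda>q. (p,q)) L2) L1). f (fst r) * g (snd r))"
  by (induction L1) (simp_all add: distrib_right sum_list_const_mult comp_def)

lemma Rset_mult:
  assumes "F \<in> Rset" "G \<in> Rset" shows "(\<lambda>z. F z * G z) \<in> Rset"
proof -
  obtain L1 where L1: "\<forall>p\<in>set L1. continuous_on UNIV (fst p) \<and> continuous_on UNIV (snd p)"
     "F = (\<lambda>z. \<Sum>p\<leftarrow>L1. fst p (fst z) * snd p (snd z))" using assms(1) unfolding Rset_def by blast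
  obtain L2 where L2: "\<forall>p\<in>set L2. continuous_on UNIV (fst p) \<and> continuous_on UNIV (snd p)"
     "G = (\<lambda>z. \<Sum>p\<leftarrow>L2. fst p (fst z) * snd p (snd z))" using assms(2) unfolding Rset_def by blast
  define M where "M = concat (map (\<lambda>p. map (\<lambda>q. (p,q)) L2) L1)"
  define L where "L = map (\<lambda>r. ((\<lambda>x. fst (fst r) x * fst (snd r) x), (\<lambda>y. snd (fst r) y * snd (snd r) y))) M"
  have "\<forall>p\<in>set L. continuous_on UNIV (fst p) \<and> continuous_on UNIV (snd p)"
    using L1(1) L2(1) by (auto simp: L_def M_def intro!: continuous_on_mult)
  moreover have "(\<lambda>z. F z * G z) = (\<lambda>z. \<Sum>p\<leftarrow>L. fst p (fst z) * snd p (snd z))"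
  proof
    fix z :: "real \<times> real"
    have "F z * G z = (\<Sum>r\<leftarrow>M. (fst (fst r) (fst z) * snd (fst r) (snd z)) * (fst (snd r) (fst z) * snd (snd r) (snd z)))"
      unfolding L1(2) L2(2) M_def by (rule sum_list_mult_lists)
    also have "\<dots> = (\<Sum>p\<leftarrow>L. fst p (fst z) * snd p (snd z))"
      unfolding L_def by (simp add: comp_def algebra_simps)
    finally show "F z * G z = (\<Sum>p\<leftarrow>L. fst p (fst z) * snd p (snd z))" .
  qed
  ultimately show ?thesis unfolding Rset_def by blast
qed

lemma Rset_add:
  assumes "F \<in> Rset" "G \<in> Rset" shows "(\<lambda>z. F z + G z) \<in> Rset"
proof -
  obtain L1 where L1: "\<forall>p\<in>set L1. continuous_on UNIV (fst p) \<and> continuous_on UNIV (snd p)"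
     "F = (\<lambda>z. \<Sum>p\<leftarrow>L1. fst p (fst z) * snd p (snd z))" using assms(1) unfolding Rset_def by blast
  obtain L2 where L2: "\<forall>p\<in>set L2. continuous_on UNIV (fst p) \<and> continuous_on UNIV (snd p)"
     "G = (\<lambda>z. \<Sum>p\<leftarrow>L2. fst p (fst z) * snd p (snd z))" using assms(2) unfolding Rset_def by blast
  show ?thesis unfolding Rset_def
    by (rule CollectI, rule exI[of _ "L1 @ L2"]) (use L1 L2 in auto)
qed

lemma Rset_const: "(\<lambda>z. k) \<in> Rset"
  unfolding Rset_def
  by (rule CollectI, rule exI[of _ "[((\<lambda>x. k), (\<lambda>y. 1))]"]) auto

lemma Rset_fst: "(\<lambda>z. fst z) \<in> Rset"
  unfolding Rset_def
  by (rule CollectI, rule exI[of _ "[((\<lambda>x. x), (\<lambda>y. 1))]"]) (auto simp: continuous_on_id)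

lemma Rset_snd: "(\<lambda>z. snd z) \<in> Rset"
  unfolding Rset_def
  by (rule CollectI, rule exI[of _ "[((\<lambda>x. 1), (\<lambda>y. y))]"]) (auto simp: continuous_on_id)

lemma approx:
  assumes "continuous_on UNIV G" "e > 0"
  shows "\<exists>F\<in>Rset. \<forall>z\<in>{0..1} \<times> {0..1}. \<bar>G z - F z\<bar> < e"
proof -
  interpret PR: function_ring_on Rset "{0..1::real} \<times> {0..1::real}"
  proof unfold_locales
    show "compact ({0..1::real} \<times> {0..1::real})" by (intro compact_Times) auto
    show "continuous_on ({0..1} \<times> {0..1}) f" if "f \<in> Rset" for f
      using Rset_conv[OF that] continuous_on_subset by blast
    show "(\<lambda>x. f x + g x) \<in> Rset" if "f \<in> Rset" "g \<in> Rset" for f g using Rset_add that .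
    show "(\<lambda>x. f x * g x) \<in> Rset" if "f \<in> Rset" "g \<in> Rset" for f g using Rset_mult that .
    show "(\<lambda>_. k) \<in> Rset" for k using Rset_const .
    show "\<exists>f\<in>Rset. f x \<noteq> f y" if "x \<noteq> y" for x y :: "real \<times> real"
    proof (cases "fst x = fst y")
      case True
      then have "snd x \<noteq> snd y" using that by (simp add: prod_eq_iff)
      then show ?thesis using Rset_snd by blast
    next
      case False then show ?thesis using Rset_fst by blast
    qed
  qed
  show ?thesis
    using PR.Stone_Weierstrass_basic[OF continuous_on_subset[OF assms(1)] assms(2)] by blast
qed

theorem equid2:
  assumes G: "continuous_on UNIV G"
  shows "(\<lambda>n. Sn G n) \<longlonglongrightarrow> T G"
proof (rule tendstoI)
  fix e :: real assume e: "e > 0"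
  define d where "d = e / (3 * (1 + PhiA * PhiA))"
  have PP: "PhiA * PhiA \<ge> 0" using PhiA_nonneg by simp
  have d: "d > 0" using e PP unfolding d_def by (simp add: field_simps add_pos_nonneg)
  obtain F where F: "F \<in> Rset" "\<forall>z\<in>{0..1} \<times> {0..1}. \<bar>G z - F z\<bar> < d"
    using approx[OF G d] by blast
  have Fc: "continuous_on UNIV F" and Fl: "(\<lambda>n. Sn F n) \<longlonglongrightarrow> T F" using Rset_conv[OF F(1)] by auto
  have dc: "continuous_on UNIV (\<lambda>z. G z - F z)" using G Fc by (intro continuous_on_diff)
  have b: "\<bar>G (x,y) - F (x,y)\<bar> \<le> d" if "x \<in> {0..1}" "y \<in> {0..1}" for x y
    using F(2) that by (auto intro: less_imp_le)
  have T1: "\<bar>T G - T F\<bar> \<le> d * PhiA * PhiA"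
    using T_diff_bound[OF dc _ b] d T_diff[OF G Fc] by auto
  have S1: "\<bar>Sn G n - Sn F n\<bar> \<le> d" for n
    using Sn_bound[of d "\<lambda>z. G z - F z" n, OF _ b] d by (simp add: Sn_diff)
  have pos3: "3 * (1 + PhiA * PhiA) > 0" using PP by (simp add: add_pos_nonneg)
  have frac: "(2 + PhiA * PhiA) / (3 * (1 + PhiA * PhiA)) \<le> 1"
    by (subst pos_divide_le_eq[OF pos3]) (use PP in simp)
  have "\<forall>\<^sub>F n in sequentially. dist (Sn F n) (T F) < d" using Fl d tendstoD by blast
  then show "\<forall>\<^sub>F n in sequentially. dist (Sn G n) (T G) < e"
  proof eventually_elim
    case (elim n)
    have "dist (Sn G n) (T G) \<le> \<bar>Sn G n - Sn F n\<bar> + dist (Sn F n) (T F) + \<bar>T G - T F\<bar>"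
      by (simp add: dist_real_def)
    also have "\<dots> < d + d + d * (PhiA * PhiA)" using S1[of n] elim T1 by simp
    also have "\<dots> = e * ((2 + PhiA * PhiA) / (3 * (1 + PhiA * PhiA)))" unfolding d_def by (simp add: field_simps add_divide_distrib)
    also have "\<dots> \<le> e * 1" using e frac by (intro mult_left_mono) auto
    finally show ?case by simp
  qed
qed

end

definition Lam :: "real \<times> real \<Rightarrow> real" where
  "Lam z = - ln \<bar>fst z - snd z\<bar>"

definition Kd :: "real \<Rightarrow> real \<times> real \<Rightarrow> real" where
  "Kd d z = - ln (max \<bar>fst z - snd z\<bar> d)"

lemma Lam_meas: "Lam \<in> borel_measurable (lborel \<Otimes>\<^sub>M lborel)"
  unfolding Lam_def by measurable

lemma Kd_cont: "d > 0 \<Longrightarrow> continuous_on UNIV (Kd d)"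
  unfolding Kd_def
  by (intro continuous_on_minus continuous_on_ln continuous_on_max continuous_on_rabs
        continuous_on_diff continuous_on_fst continuous_on_snd continuous_on_id continuous_on_const) auto

lemma AE_offdiag: "AE z in lborel \<Otimes>\<^sub>M lborel. fst z \<noteq> snd (z::real\<times>real)"
proof -
  have H: "AE x in lborel. AE y in lborel. (x::real) \<noteq> y"
  proof (rule AE_I2)
    fix x :: real assume "x \<in> space lborel"
    have "AE y in lborel. y \<noteq> x" by (rule AE_lborel_singleton)
    then show "AE y in lborel. x \<noteq> y"
      by (rule eventually_mono) auto
  qed
  have S: "{x \<in> space (lborel \<Otimes>\<^sub>M lborel). fst x \<noteq> snd (x::real\<times>real)} \<in> sets (lborel \<Otimes>\<^sub>M lborel)"
    by measurable
  show ?thesis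
    using pair_sigma_finite.AE_pair_measure[OF pair_lborel S] H by simp
qed

lemma Kd_mono: "0 < d' \<Longrightarrow> d' \<le> d \<Longrightarrow> Kd d z \<le> Kd d' z"
  unfolding Kd_def by (auto intro!: ln_mono simp: max_def)

lemma Kd_eq: "d \<le> \<bar>fst z - snd z\<bar> \<Longrightarrow> Kd d z = Lam z"
  unfolding Kd_def Lam_def by (simp add: max_def)

lemma Kd_nonneg: "0 < d \<Longrightarrow> d \<le> 1 \<Longrightarrow> fst z \<in> {0..1} \<Longrightarrow> snd z \<in> {0..1} \<Longrightarrow> 0 \<le> Kd d z"
  unfolding Kd_def by (auto simp: max_def abs_if)

lemma Kd_le: "0 < d \<Longrightarrow> d \<le> 1 \<Longrightarrow> fst z \<in> {0..1} \<Longrightarrow> snd z \<in> {0..1} \<Longrightarrow> Kd d z \<le> - ln d"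
  unfolding Kd_def by (auto simp: max_def)

context eqd
begin

lemma energy_conv:
  assumes nonneg: "\<And>x. \<Phi> x \<ge> 0"
    and bound: "\<And>d. 0 < d \<Longrightarrow> d < 1 \<Longrightarrow> T (Kd d) \<le> C"
  shows "integrable (lborel \<Otimes>\<^sub>M lborel) (\<lambda>(x,y). Lam (x,y) * \<Phi> x * \<Phi> y)"
    and "(\<lambda>m. T (Kd (1 / (real m + 2)))) \<longlonglongrightarrow> T Lam"
proof -
  define dd where "dd m = 1 / (real m + 2)" for m :: nat
  have dd_pos: "dd m > 0" for m unfolding dd_def by simp
  have dd_lt: "dd m < 1" for m unfolding dd_def by (simp add: field_simps)
  have dd_mono: "dd m' \<le> dd m" if "m \<le> m'" for m m' unfolding dd_def using that by (simp add: frac_le)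
  define fm where "fm m = (\<lambda>(x,y). Kd (dd m) (x,y) * \<Phi> x * \<Phi> y)" for m
  have fi: "integrable (lborel \<Otimes>\<^sub>M lborel) (fm m)" for m
    unfolding fm_def by (rule T_integrable[OF Kd_cont[OF dd_pos]])
  have fmono: "mono (\<lambda>m. fm m z)" for z
  proof (rule monoI)
    fix m m' :: nat assume "m \<le> m'"
    then have "Kd (dd m) z \<le> Kd (dd m') z" using Kd_mono dd_pos dd_mono by blast
    then show "fm m z \<le> fm m' z"
      unfolding fm_def using nonneg by (auto intro!: mult_right_mono split: prod.splits)
  qed
  have dd_lim: "dd \<longlonglongrightarrow> 0"
    unfolding dd_def by real_asymp
  have flim: "AE z in lborel \<Otimes>\<^sub>M lborel. (\<lambda>m. fm m z) \<longlonglongrightarrow> (\<lambda>(x,y). Lam (x,y) * \<Phi> x * \<Phi> y) z"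
    using AE_offdiag
  proof eventually_elim
    case (elim z)
    then have pos: "\<bar>fst z - snd z\<bar> > 0" by simp
    have "\<forall>\<^sub>F m in sequentially. dd m < \<bar>fst z - snd z\<bar>"
      using dd_lim pos by (rule order_tendstoD)
    then have "\<forall>\<^sub>F m in sequentially. fm m z = (\<lambda>(x,y). Lam (x,y) * \<Phi> x * \<Phi> y) z"
      by eventually_elim (auto simp: fm_def Kd_eq split: prod.splits)
    then show ?case by (rule tendsto_eventually)
  qed
  have Tf: "T (Kd (dd m)) = integral\<^sup>L (lborel \<Otimes>\<^sub>M lborel) (fm m)" for m
    unfolding T_def fm_def by simp
  have inc: "incseq (\<lambda>m. T (Kd (dd m)))"
    unfolding Tf incseq_def
    by (intro allI impI integral_mono fi) (use fmono in \<open>auto simp: mono_def\<close>)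
  have bdd: "bdd_above (range (\<lambda>m. T (Kd (dd m))))"
    using bound dd_pos dd_lt by (auto intro!: bdd_aboveI)
  have ilim: "(\<lambda>m. integral\<^sup>L (lborel \<Otimes>\<^sub>M lborel) (fm m)) \<longlonglongrightarrow> (SUP m. T (Kd (dd m)))"
    using LIMSEQ_incseq_SUP[OF bdd inc] unfolding Tf .
  have um: "(\<lambda>(x,y). Lam (x,y) * \<Phi> x * \<Phi> y) \<in> borel_measurable (lborel \<Otimes>\<^sub>M lborel)"
    using Lam_meas \<Phi>int by measurable
  show "integrable (lborel \<Otimes>\<^sub>M lborel) (\<lambda>(x,y). Lam (x,y) * \<Phi> x * \<Phi> y)"
    using integrable_monotone_convergence[OF fi _ flim ilim um] fmono by auto
  have "T Lam = (SUP m. T (Kd (dd m)))"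
    unfolding T_def[of Lam] using integral_monotone_convergence[OF fi _ flim ilim um] fmono by auto
  then show "(\<lambda>m. T (Kd (1 / (real m + 2)))) \<longlonglongrightarrow> T Lam"
    using LIMSEQ_incseq_SUP[OF bdd inc] unfolding dd_def by simp
qed

end

lemma ln_close:
  fixes r :: real
  assumes r0: "r > 0" and r1: "\<bar>r - 1\<bar> \<le> 1/2"
  shows "\<bar>ln r\<bar> \<le> 2 * \<bar>r - 1\<bar>"
proof -
  have up: "ln r \<le> r - 1" using r0 by (rule ln_le_minus_one)
  have "ln (1/r) \<le> 1/r - 1" using r0 by (intro ln_le_minus_one) simp
  moreover have "ln (1/r) = - ln r" using r0 by (simp add: ln_div)
  ultimately have lo: "- ln r \<le> 1/r - 1" by simp
  have r2: "r \<ge> 1/2" using r1 unfolding abs_le_iff by linarith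
  have "1/r - 1 \<le> 2 * \<bar>r - 1\<bar>"
  proof (cases "r \<ge> 1")
    case True
    then have "1/r \<le> 1" by simp
    then have "1/r - 1 \<le> 0" by simp
    moreover have "0 \<le> 2 * \<bar>r - 1\<bar>" by simp
    ultimately show ?thesis by (rule order_trans)
  next
    case False
    have "1/r - 1 = (1 - r) / r" using r0 by (simp add: diff_divide_distrib)
    also have "\<dots> \<le> (1 - r) / (1/2)" using r2 False by (intro divide_left_mono) auto
    also have "\<dots> = 2 * \<bar>r - 1\<bar>" using False by simp
    finally show ?thesis .
  qed
  then have "- ln r \<le> 2 * \<bar>r - 1\<bar>" using lo by (smt (verit))
  moreover have "ln r \<le> 2 * \<bar>r - 1\<bar>" using up abs_ge_self[of "r - 1"] abs_ge_zero[of "r - 1"] by (smt (verit))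
  ultimately show ?thesis by (simp add: abs_le_iff)
qed

lemma ln_diff_close:
  fixes u v :: real
  assumes v: "v > 0" and uv: "\<bar>u - v\<bar> \<le> e * v" and e0: "0 \<le> e" and e1: "e \<le> 1/2"
  shows "\<bar>ln u - ln v\<bar> \<le> 2 * e"
proof -
  have ev: "e * v \<le> (1/2) * v" using e1 v by (intro mult_right_mono) auto
  have u: "u > 0" using uv v ev unfolding abs_le_iff by linarith
  have "u / v - 1 = (u - v) / v" using v by (simp add: diff_divide_distrib)
  then have "\<bar>u / v - 1\<bar> = \<bar>u - v\<bar> / v" using v by simp
  also have "\<dots> \<le> e" using v uv by (simp add: divide_le_eq)
  finally have r: "\<bar>u / v - 1\<bar> \<le> e" .
  have "\<bar>ln (u / v)\<bar> \<le> 2 * \<bar>u / v - 1\<bar>" using u v r e1 by (intro ln_close) auto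
  moreover have "ln (u / v) = ln u - ln v" using u v by (simp add: ln_div)
  ultimately show ?thesis using r by simp
qed

lemma log_energy_Lam:
  "log_energy g h = integral\<^sup>L (lborel \<Otimes>\<^sub>M lborel) (\<lambda>(x,y). Lam (x,y) * g x * h y)"
  unfolding log_energy_def Lam_def by simp

locale mainL = eqd c \<Phi> for c :: "nat \<Rightarrow> real" and \<Phi> :: "real \<Rightarrow> real" +
  fixes l :: "nat \<Rightarrow> real" and f :: "real \<Rightarrow> real" and M :: "real"
  assumes c_in: "\<And>k. c k \<in> {0<..<1}"
    and l_pos: "\<And>k. l k > 0"
    and l_dec: "decseq l"
    and l_lim: "l \<longlonglongrightarrow> 0"
    and f_cont: "continuous_on UNIV f"
    and fM: "\<And>x. \<bar>f x\<bar> \<le> M"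
    and \<Phi>nn: "\<And>x. \<Phi> x \<ge> 0"
    and A2: "\<And>e. e > 0 \<Longrightarrow> \<exists>d>0. \<forall>\<^sub>F n in sequentially.
        (\<Sum>(i,j)\<in>{(i,j)\<in>blockA n \<times> blockA n. i \<noteq> j \<and> \<bar>c i - c j\<bar> < d}. - ln \<bar>c i - c j\<bar>)
          / real (card (blockA n \<times> blockA n)) < e"
    and A3: "\<And>e. e > 0 \<Longrightarrow> \<forall>\<^sub>F n in sequentially. \<forall>i\<in>blockA n. \<forall>j\<in>blockA n.
        i \<noteq> j \<longrightarrow> l i + l j < e * (2 * \<bar>c i - c j\<bar>)"
begin

definition mu :: "nat \<Rightarrow> real \<Rightarrow> real" where
  "mu i = mu_density f (c i) (l i)"

definition a :: "nat \<Rightarrow> real" where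
  "a i = integral\<^sup>L lborel (mu i)"

lemma M_nonneg: "M \<ge> 0"
  using fM[of 0] by linarith

lemma f_meas: "f \<in> borel_measurable lborel"
  by (rule cont_meas1[OF f_cont])

lemma mu_meas: "mu i \<in> borel_measurable lborel"
  unfolding mu_def mu_density_def centred_interval_def using f_meas by measurable

lemma mu_nz: "mu i x \<noteq> 0 \<Longrightarrow> \<bar>x - c i\<bar> < l i / 2 \<and> x \<in> {0..1}"
  unfolding mu_def mu_density_def centred_interval_def by (auto simp: indicator_def abs_if split: if_splits)

lemma mu_bound: "\<bar>mu i x\<bar> \<le> (M / l i) * indicator {c i - l i / 2 <..< c i + l i / 2} x"
proof (cases "mu i x = 0")
  case True then show ?thesis using M_nonneg l_pos[of i] by simp
next
  case False
  have d: "\<bar>x - c i\<bar> < l i / 2" using mu_nz[of i x] False by blast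
  have x: "x \<in> {c i - l i / 2 <..< c i + l i / 2}"
    unfolding greaterThanLessThan_iff using d[unfolded abs_less_iff] by linarith
  have "\<bar>mu i x\<bar> \<le> \<bar>f x\<bar> / l i" using l_pos[of i]
    unfolding mu_def mu_density_def by (auto simp: indicator_def abs_mult)
  also have "\<dots> \<le> M / l i" using fM[of x] l_pos[of i] by (simp add: divide_right_mono)
  finally show ?thesis using x by simp
qed

lemma ind_int: "integrable lborel (indicator {c i - l i / 2 <..< c i + l i / 2} :: real \<Rightarrow> real)"
  by (rule integrable_real_indicator) (use l_pos[of i] in auto)

lemma ind_integral: "integral\<^sup>L lborel (indicator {c i - l i / 2 <..< c i + l i / 2} :: real \<Rightarrow> real) = l i"
  using l_pos[of i] by simp

lemma mu_int: "integrable lborel (mu i)"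
proof -
  have "integrable lborel (\<lambda>x. (M / l i) * indicator {c i - l i / 2 <..< c i + l i / 2} x)"
    using ind_int by (rule integrable_mult_right)
  then show ?thesis
  proof (rule Bochner_Integration.integrable_bound[OF _ mu_meas], intro AE_I2)
    fix x
    have "\<bar>mu i x\<bar> \<le> \<bar>(M / l i) * indicator {c i - l i / 2 <..< c i + l i / 2} x\<bar>"
      using mu_bound[of i x] by (rule order_trans) (rule abs_ge_self)
    then show "norm (mu i x) \<le> norm ((M / l i) * indicator {c i - l i / 2 <..< c i + l i / 2} x)"
      by simp
  qed
qed

lemma mu_abs_int: "integral\<^sup>L lborel (\<lambda>x. \<bar>mu i x\<bar>) \<le> M"
proof -
  have "integral\<^sup>L lborel (\<lambda>x. \<bar>mu i x\<bar>) \<le> integral\<^sup>L lborel (\<lambda>x. (M / l i) * indicator {c i - l i / 2 <..< c i + l i / 2} x)"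
    by (intro integral_mono mu_bound integrable_mult_right ind_int) (use mu_int in auto)
  also have "\<dots> = M" using l_pos[of i] by simp
  finally show ?thesis .
qed

lemma a_bound: "\<bar>a i\<bar> \<le> M"
  unfolding a_def using integral_abs_bound[of lborel "mu i"] mu_abs_int[of i] by linarith

lemma pair_est:
  assumes e: "0 < e" "e \<le> 1/2" and lij: "l i + l j < e * (2 * \<bar>c i - c j\<bar>)"
  shows "\<bar>log_energy (mu i) (mu j) - Lam (c i, c j) * a i * a j\<bar> \<le> 2 * e * M * M"
proof -
  define L0 where "L0 = Lam (c i, c j)"
  have "0 < e * (2 * \<bar>c i - c j\<bar>)" using lij l_pos[of i] l_pos[of j] by linarith
  then have cij: "\<bar>c i - c j\<bar> > 0" using e by (simp add: zero_less_mult_iff)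
  define K where "K z = Lam z - L0" for z
  have Km: "K \<in> borel_measurable (lborel \<Otimes>\<^sub>M lborel)" unfolding K_def using Lam_meas by measurable
  have Kb: "\<bar>K (x,y)\<bar> \<le> 2 * e" if "mu i x \<noteq> 0" "mu j y \<noteq> 0" for x y
  proof -
    have x: "\<bar>x - c i\<bar> < l i / 2" and y: "\<bar>y - c j\<bar> < l j / 2" using mu_nz that by auto
    have "\<bar>\<bar>x - y\<bar> - \<bar>c i - c j\<bar>\<bar> \<le> \<bar>(x - y) - (c i - c j)\<bar>" by (smt (verit))
    also have "\<dots> \<le> e * \<bar>c i - c j\<bar>"
    proof -
      define w where "w = e * \<bar>c i - c j\<bar>"
      have "l i + l j < 2 * w" using lij unfolding w_def by (simp add: algebra_simps)
      then have "x - y - (c i - c j) \<le> w" "- (x - y - (c i - c j)) \<le> w"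
        using x y unfolding abs_less_iff by linarith+
      then have "\<bar>x - y - (c i - c j)\<bar> \<le> w" by (simp only: abs_le_iff)
      then show ?thesis unfolding w_def .
    qed
    finally have "\<bar>ln \<bar>x - y\<bar> - ln \<bar>c i - c j\<bar>\<bar> \<le> 2 * e"
      using cij e by (intro ln_diff_close) auto
    then show ?thesis unfolding K_def L0_def Lam_def by simp
  qed
  note kb = kernel_bound[OF mu_int mu_int Km _ Kb]
  have i1: "integrable (lborel \<Otimes>\<^sub>M lborel) (\<lambda>(x,y). K (x,y) * mu i x * mu j y)"
    using kb(1) e by simp
  have i2: "integrable (lborel \<Otimes>\<^sub>M lborel) (\<lambda>z. L0 * (case z of (x,y) \<Rightarrow> mu i x * mu j y))"
    using prod_integrable(1)[OF mu_int[of i] mu_int[of j]] by (rule integrable_mult_right)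
  have "log_energy (mu i) (mu j) = integral\<^sup>L (lborel \<Otimes>\<^sub>M lborel)
      (\<lambda>z. (case z of (x,y) \<Rightarrow> K (x,y) * mu i x * mu j y) + L0 * (case z of (x,y) \<Rightarrow> mu i x * mu j y))"
    unfolding log_energy_Lam K_def
    by (intro Bochner_Integration.integral_cong refl) (auto simp: algebra_simps split: prod.splits)
  also have "\<dots> = integral\<^sup>L (lborel \<Otimes>\<^sub>M lborel) (\<lambda>(x,y). K (x,y) * mu i x * mu j y)
       + integral\<^sup>L (lborel \<Otimes>\<^sub>M lborel) (\<lambda>z. L0 * (case z of (x,y) \<Rightarrow> mu i x * mu j y))"
    by (rule Bochner_Integration.integral_add[OF i1 i2])
  also have "integral\<^sup>L (lborel \<Otimes>\<^sub>M lborel) (\<lambda>z. L0 * (case z of (x,y) \<Rightarrow> mu i x * mu j y)) = L0 * a i * a j"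
    using prod_integrable(2)[OF mu_int[of i] mu_int[of j]] by (simp add: a_def)
  finally have eq: "log_energy (mu i) (mu j) - L0 * a i * a j = integral\<^sup>L (lborel \<Otimes>\<^sub>M lborel) (\<lambda>(x,y). K (x,y) * mu i x * mu j y)"
    by simp
  have "\<bar>integral\<^sup>L (lborel \<Otimes>\<^sub>M lborel) (\<lambda>(x,y). K (x,y) * mu i x * mu j y)\<bar>
      \<le> 2 * e * integral\<^sup>L lborel (\<lambda>x. \<bar>mu i x\<bar>) * integral\<^sup>L lborel (\<lambda>x. \<bar>mu j x\<bar>)"
    using kb(2) e by simp
  also have "\<dots> \<le> 2 * e * M * M"
    using mu_abs_int[of i] mu_abs_int[of j] e
    by (intro mult_mono) (auto intro: integral_nonneg simp: M_nonneg)
  finally show ?thesis using eq unfolding L0_def by simp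
qed

end

lemma conv_crit:
  fixes X :: "nat \<Rightarrow> real"
  assumes "\<And>e. e > 0 \<Longrightarrow> \<forall>\<^sub>F n in sequentially. \<bar>X n - L\<bar> \<le> C * e"
  shows "X \<longlonglongrightarrow> L"
proof (rule tendstoI)
  fix e :: real assume e: "e > 0"
  define e' where "e' = e / (2 * (\<bar>C\<bar> + 1))"
  have e': "e' > 0" unfolding e'_def using e by (simp add: add_pos_nonneg)
  have ce: "C * e' < e"
  proof -
    have "C * e' \<le> \<bar>C\<bar> * e'" using e' by (simp add: mult_right_mono)
    also have "\<dots> < (\<bar>C\<bar> + 1) * e'" using e' by simp
    also have "\<dots> = e / 2" unfolding e'_def by (simp add: field_simps add_pos_nonneg)
    finally show ?thesis using e by simp
  qed
  show "\<forall>\<^sub>F n in sequentially. dist (X n) L < e"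
    using assms[OF e']
  proof eventually_elim
    case (elim n)
    then show ?case using ce by (simp add: dist_real_def)
  qed
qed

context mainL
begin

definition hh :: "nat \<Rightarrow> real \<Rightarrow> real" where
  "hh m x = max 0 (1 - x * (real m + 1) / 2) + max 0 (1 - (1 - x) * (real m + 1) / 2)"

lemma hh_cont: "continuous_on UNIV (hh m)"
  unfolding hh_def by (intro continuous_intros) auto

lemma hh_nonneg: "hh m x \<ge> 0"
  unfolding hh_def by simp

lemma hh_edge:
  assumes "x < 1 / (real m + 1) \<or> 1 - 1 / (real m + 1) < x"
  shows "hh m x \<ge> 1/2"
proof -
  have mp: "real m + 1 > 0" by simp
  show ?thesis
  proof (cases "x < 1 / (real m + 1)")
    case True
    then have "x * (real m + 1) < 1" using mp by (simp add: field_simps)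
    then have "1/2 \<le> max 0 (1 - x * (real m + 1) / 2)" by simp
    moreover have "0 \<le> max 0 (1 - (1 - x) * (real m + 1) / 2)" by simp
    ultimately show ?thesis unfolding hh_def by linarith
  next
    case False
    then have "1 - 1 / (real m + 1) < x" using assms by simp
    then have "(1 - x) * (real m + 1) < 1" using mp by (simp add: field_simps)
    then have "1/2 \<le> max 0 (1 - (1 - x) * (real m + 1) / 2)" by simp
    moreover have "0 \<le> max 0 (1 - x * (real m + 1) / 2)" by simp
    ultimately show ?thesis unfolding hh_def by linarith
  qed
qed

lemma hh_le2:
  assumes "x \<in> {0..1}" shows "hh m x \<le> 2"
proof -
  have "x * (real m + 1) / 2 \<ge> 0" "(1 - x) * (real m + 1) / 2 \<ge> 0" using assms by auto
  then have "max 0 (1 - x * (real m + 1) / 2) \<le> 1" "max 0 (1 - (1 - x) * (real m + 1) / 2) \<le> 1"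
    by auto
  then show ?thesis unfolding hh_def by linarith
qed

lemma hh_int_lim: "(\<lambda>m. integral\<^sup>L lborel (\<lambda>x. hh m x * \<Phi> x)) \<longlonglongrightarrow> 0"
proof -
  have "(\<lambda>m. integral\<^sup>L lborel (\<lambda>x. hh m x * \<Phi> x)) \<longlonglongrightarrow> integral\<^sup>L lborel (\<lambda>x::real. 0::real)"
  proof -
    have m1: "(\<lambda>x::real. 0::real) \<in> borel_measurable lborel" by simp
    have m2: "(\<lambda>x. hh m x * \<Phi> x) \<in> borel_measurable lborel" for m
      using cont_meas1[OF hh_cont[of m]] \<Phi>int by measurable
    have iw: "integrable lborel (\<lambda>x. 2 * \<bar>\<Phi> x\<bar>)" using \<Phi>int by auto
    have bnd: "AE x in lborel. norm (hh m x * \<Phi> x) \<le> 2 * \<bar>\<Phi> x\<bar>" for m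
    proof (rule AE_I2)
      fix x :: real
      show "norm (hh m x * \<Phi> x) \<le> 2 * \<bar>\<Phi> x\<bar>"
      proof (cases "x \<in> {0..1}")
        case True
        then show ?thesis using hh_le2[OF True, of m] hh_nonneg[of m x]
          by (simp add: abs_mult mult_right_mono)
      next
        case False then show ?thesis using \<Phi>0 by simp
      qed
    qed
    have ae: "AE x in lborel. x \<noteq> 0 \<and> x \<noteq> 1"
      using AE_lborel_singleton[of 0] AE_lborel_singleton[of 1] by eventually_elim auto
    have lim: "AE x in lborel. (\<lambda>m. hh m x * \<Phi> x) \<longlonglongrightarrow> 0"
      using ae
    proof eventually_elim
      case (elim x)
      show ?case
      proof (cases "x \<in> {0..1}")
        case False then show ?thesis using \<Phi>0 by simp
      next
        case True
        then have x: "0 < x" "x < 1" using elim by auto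
        obtain N :: nat where N: "2 / x + 2 / (1 - x) < real N" using reals_Archimedean2 by blast
        have "\<forall>\<^sub>F m in sequentially. hh m x * \<Phi> x = 0"
          using eventually_ge_at_top[of N]
        proof eventually_elim
          case (elim m)
          then have m: "2 / x + 2 / (1 - x) < real m + 1" using N by linarith
          have "2 / x < real m + 1" using m x by (smt (verit) divide_pos_pos)
          then have "2 < x * (real m + 1)" using x by (simp add: field_simps)
          then have t1: "max 0 (1 - x * (real m + 1) / 2) = 0" by simp
          have "2 / (1 - x) < real m + 1" using m x by (smt (verit) divide_pos_pos)
          then have "2 < (1 - x) * (real m + 1)" using x by (simp add: field_simps)
          then have t2: "max 0 (1 - (1 - x) * (real m + 1) / 2) = 0" by simp
          show ?case unfolding hh_def using t1 t2 by simp
        qed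
        then show ?thesis by (rule tendsto_eventually)
      qed
    qed
    note DC = Bochner_Integration.integral_dominated_convergence[of "\<lambda>x::real. 0::real" lborel "\<lambda>m x. hh m x * \<Phi> x" "\<lambda>x. 2 * \<bar>\<Phi> x\<bar>"]
    show ?thesis
      by (rule DC[OF m1 m2 iw lim bnd])
  qed
  then show ?thesis by simp
qed

lemma mass_i:
  assumes rho: "l i / 2 < \<rho>" and tau: "\<tau> \<ge> 0"
    and UC: "\<And>x y. x \<in> {0..1} \<Longrightarrow> y \<in> {0..1} \<Longrightarrow> \<bar>x - y\<bar> < \<rho> \<Longrightarrow> \<bar>f x - f y\<bar> \<le> \<tau>"
  shows "\<bar>a i - f (c i)\<bar> \<le> \<tau> + M * (if c i < l i / 2 \<or> 1 - l i / 2 < c i then 1 else 0)"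
proof -
  define b :: real where "b = (if c i < l i / 2 \<or> 1 - l i / 2 < c i then 1 else 0)"
  define B where "B = \<tau> + M * b"
  define J where "J = {c i - l i / 2 <..< c i + l i / 2}"
  have li: "l i > 0" using l_pos by simp
  have ci: "c i \<in> {0..1}" using c_in[of i] by auto
  have b0: "b \<ge> 0" unfolding b_def by simp
  have B0: "B \<ge> 0" unfolding B_def using tau b0 M_nonneg by simp
  define g where "g x = mu i x - f (c i) * (indicator J x / l i)" for x
  have iJ: "integrable lborel (\<lambda>x. f (c i) * (indicator J x / l i))"
    unfolding J_def using ind_int[of i] by (intro integrable_mult_right integrable_divide)
  have intJ: "integral\<^sup>L lborel (\<lambda>x. f (c i) * (indicator J x / l i)) = f (c i)"
    unfolding J_def using ind_integral[of i] li by simp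
  have eq: "a i - f (c i) = integral\<^sup>L lborel g"
    unfolding g_def a_def using Bochner_Integration.integral_diff[OF mu_int[of i] iJ] intJ by simp
  have gint: "integrable lborel g" unfolding g_def using mu_int iJ by auto
  have pt: "\<bar>g x\<bar> \<le> (B / l i) * indicator J x" for x
  proof (cases "x \<in> J")
    case False
    have "mu i x = 0"
    proof (rule ccontr)
      assume "mu i x \<noteq> 0"
      then have d: "\<bar>x - c i\<bar> < l i / 2" using mu_nz by blast
      have "x \<in> J" unfolding J_def greaterThanLessThan_iff using d[unfolded abs_less_iff] by linarith
      then show False using False by simp
    qed
    then show ?thesis using False by (simp add: g_def)
  next
    case xJ: True
    then have xc: "\<bar>x - c i\<bar> < l i / 2" unfolding J_def greaterThanLessThan_iff abs_less_iff by linarith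
    show ?thesis
    proof (cases "x \<in> {0..1}")
      case True
      have "mu i x = f x / l i"
        using xJ True unfolding mu_def mu_density_def J_def centred_interval_def by simp
      then have "g x = (f x - f (c i)) / l i" using xJ by (simp add: g_def diff_divide_distrib)
      moreover have "\<bar>f x - f (c i)\<bar> \<le> \<tau>" using UC[OF True ci] xc rho by linarith
      ultimately have "\<bar>g x\<bar> \<le> \<tau> / l i" using li by (simp add: divide_right_mono)
      also have "\<dots> \<le> B / l i" using li M_nonneg b0 unfolding B_def by (simp add: divide_right_mono)
      finally show ?thesis using xJ by simp
    next
      case False
      have "mu i x = 0" using False unfolding mu_def mu_density_def by simp
      then have "g x = - f (c i) / l i" using xJ by (simp add: g_def)
      then have "\<bar>g x\<bar> \<le> M / l i" using fM[of "c i"] li by (simp add: divide_right_mono)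
      moreover have "b = 1"
      proof -
        have "x < 0 \<or> x > 1" using False by auto
        then have "c i < l i / 2 \<or> 1 - l i / 2 < c i" using xJ unfolding J_def by auto
        then show ?thesis unfolding b_def by simp
      qed
      moreover have "M / l i \<le> B / l i" unfolding B_def using tau li \<open>b = 1\<close>
        by (intro divide_right_mono) auto
      ultimately have "\<bar>g x\<bar> \<le> B / l i" by linarith
      then show ?thesis using xJ by simp
    qed
  qed
  have "\<bar>integral\<^sup>L lborel g\<bar> \<le> integral\<^sup>L lborel (\<lambda>x. \<bar>g x\<bar>)" by (rule integral_abs_bound)
  also have "\<dots> \<le> integral\<^sup>L lborel (\<lambda>x. (B / l i) * indicator J x)"
    by (intro integral_mono pt integrable_mult_right) (use gint ind_int[of i] J_def in auto)
  also have "\<dots> = B" unfolding J_def using li ind_integral[of i] by simp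
  finally show ?thesis using eq unfolding B_def b_def by simp
qed

end

context mainL
begin

lemma f_uc:
  assumes "e > 0"
  obtains \<rho> where "\<rho> > 0" "\<And>x y. x \<in> {0..1} \<Longrightarrow> y \<in> {0..1} \<Longrightarrow> \<bar>x - y\<bar> < \<rho> \<Longrightarrow> \<bar>f x - f y\<bar> \<le> e"
proof -
  have "uniformly_continuous_on {0..1} f"
    by (rule compact_uniformly_continuous) (use f_cont continuous_on_subset in auto)
  then obtain d where d: "d > 0" "\<forall>x\<in>{0..1}. \<forall>x'\<in>{0..1}. dist x' x < d \<longrightarrow> dist (f x') (f x) < e"
    unfolding uniformly_continuous_on_def using assms by metis
  show ?thesis
  proof (rule that[OF d(1)])
    fix x y :: real assume "x \<in> {0..1}" "y \<in> {0..1}" "\<bar>x - y\<bar> < d"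
    then have "dist (f x) (f y) < e" using d(2) by (auto simp: dist_real_def)
    then show "\<bar>f x - f y\<bar> \<le> e" by (simp add: dist_real_def)
  qed
qed

lemma l_mono: "n \<le> i \<Longrightarrow> l i \<le> l n"
  using l_dec by (simp add: decseq_def)

lemma mass_lim: "(\<lambda>n. (\<Sum>i\<in>blockA n. \<bar>a i - f (c i)\<bar>) / real n) \<longlonglongrightarrow> 0"
proof (rule conv_crit[where C = "1 + 4 * M"])
  fix e :: real assume e: "e > 0"
  obtain \<rho> where rho: "\<rho> > 0" "\<And>x y. x \<in> {0..1} \<Longrightarrow> y \<in> {0..1} \<Longrightarrow> \<bar>x - y\<bar> < \<rho> \<Longrightarrow> \<bar>f x - f y\<bar> \<le> e"
    using f_uc[OF e] by blast
  have "\<forall>\<^sub>F m in sequentially. integral\<^sup>L lborel (\<lambda>x. hh m x * \<Phi> x) < e"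
    using hh_int_lim e by (rule order_tendstoD)
  then obtain m where m: "integral\<^sup>L lborel (\<lambda>x. hh m x * \<Phi> x) < e"
    by (meson eventually_sequentially order_refl)
  define \<eta> where "\<eta> = min \<rho> (1 / (real m + 1))"
  have eta: "\<eta> > 0" unfolding \<eta>_def using rho by simp
  have ev1: "\<forall>\<^sub>F n in sequentially. l n < 2 * \<eta>"
    using l_lim eta by (intro order_tendstoD) auto
  have ev2: "\<forall>\<^sub>F n in sequentially. (\<Sum>k\<in>blockA n. hh m (c k)) / real n < 2 * e"
  proof -
    have "2 * e > integral\<^sup>L lborel (\<lambda>x. hh m x * \<Phi> x)" using m e by simp
    then show ?thesis by (rule order_tendstoD(2)[OF A1[OF hh_cont[of m]]])
  qed
  show "\<forall>\<^sub>F n in sequentially. \<bar>(\<Sum>i\<in>blockA n. \<bar>a i - f (c i)\<bar>) / real n - 0\<bar> \<le> (1 + 4 * M) * e"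
    using ev1 ev2 eventually_gt_at_top[of 0]
  proof eventually_elim
    case (elim n)
    have each: "\<bar>a i - f (c i)\<bar> \<le> e + M * (2 * hh m (c i))" if i: "i \<in> blockA n" for i
    proof -
      have "n \<le> i" using i by (simp add: blockA_def)
      then have li: "l i < 2 * \<eta>" using l_mono elim(1) by fastforce
      then have "l i / 2 < \<rho>" unfolding \<eta>_def by simp
      then have mi: "\<bar>a i - f (c i)\<bar> \<le> e + M * (if c i < l i / 2 \<or> 1 - l i / 2 < c i then 1 else 0)"
        using mass_i[of i \<rho> e] rho(2) e by auto
      have "(if c i < l i / 2 \<or> 1 - l i / 2 < c i then 1 else 0) \<le> 2 * hh m (c i)"
      proof (cases "c i < l i / 2 \<or> 1 - l i / 2 < c i")
        case True
        have "l i / 2 < 1 / (real m + 1)" using li unfolding \<eta>_def by simp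
        then have "c i < 1 / (real m + 1) \<or> 1 - 1 / (real m + 1) < c i" using True by linarith
        then have "hh m (c i) \<ge> 1/2" by (rule hh_edge)
        then show ?thesis using True by simp
      next
        case False then show ?thesis using hh_nonneg[of m "c i"] by simp
      qed
      then have "M * (if c i < l i / 2 \<or> 1 - l i / 2 < c i then 1 else 0) \<le> M * (2 * hh m (c i))"
        using M_nonneg by (intro mult_left_mono) auto
      then show ?thesis using mi by linarith
    qed
    have "(\<Sum>i\<in>blockA n. \<bar>a i - f (c i)\<bar>) \<le> (\<Sum>i\<in>blockA n. e + M * (2 * hh m (c i)))"
      using each by (rule sum_mono)
    also have "\<dots> = real n * e + 2 * M * (\<Sum>i\<in>blockA n. hh m (c i))"
      by (simp add: sum.distrib sum_distrib_left mult.assoc mult.left_commute)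
    finally have "(\<Sum>i\<in>blockA n. \<bar>a i - f (c i)\<bar>) / real n \<le> (real n * e + 2 * M * (\<Sum>i\<in>blockA n. hh m (c i))) / real n"
      by (rule divide_right_mono) simp
    also have "\<dots> = e + 2 * M * ((\<Sum>i\<in>blockA n. hh m (c i)) / real n)"
      using elim(3) by (simp add: add_divide_distrib)
    finally have s: "(\<Sum>i\<in>blockA n. \<bar>a i - f (c i)\<bar>) / real n \<le> e + 2 * M * ((\<Sum>i\<in>blockA n. hh m (c i)) / real n)" .
    have "2 * M * ((\<Sum>i\<in>blockA n. hh m (c i)) / real n) \<le> 2 * M * (2 * e)"
      using elim(2) M_nonneg by (intro mult_left_mono) auto
    then have "(\<Sum>i\<in>blockA n. \<bar>a i - f (c i)\<bar>) / real n \<le> (1 + 4 * M) * e"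
      using s by (simp add: algebra_simps)
    moreover have "(\<Sum>i\<in>blockA n. \<bar>a i - f (c i)\<bar>) / real n \<ge> 0" by (simp add: sum_nonneg)
    ultimately show ?case by simp
  qed
qed

end

lemma finite_pairs: "finite A \<Longrightarrow> finite {(i,j)\<in>A \<times> A. P i j}"
  by (rule finite_subset[of _ "A \<times> A"]) auto

lemma sum_offdiag:
  assumes "finite A"
  shows "(\<Sum>p\<in>A \<times> A. g p) = (\<Sum>p\<in>{(i,j)\<in>A \<times> A. i \<noteq> j}. g p) + (\<Sum>i\<in>A. g (i,i))"
proof -
  have U: "A \<times> A = {(i,j)\<in>A \<times> A. i \<noteq> j} \<union> (\<lambda>i. (i,i)) ` A" by auto
  have "(\<Sum>p\<in>A \<times> A. g p) = (\<Sum>p\<in>{(i,j)\<in>A \<times> A. i \<noteq> j}. g p) + (\<Sum>p\<in>(\<lambda>i. (i,i)) ` A. g p)"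
    by (subst U, rule sum.union_disjoint) (use assms finite_pairs in auto)
  also have "(\<Sum>p\<in>(\<lambda>i. (i,i)) ` A. g p) = (\<Sum>i\<in>A. g (i,i))"
    by (subst sum.reindex) (auto simp: inj_on_def)
  finally show ?thesis .
qed

lemma card_offdiag_le: "card {(i,j)\<in>blockA n \<times> blockA n. i \<noteq> j} \<le> n * n"
proof -
  have "card {(i,j)\<in>blockA n \<times> blockA n. i \<noteq> j} \<le> card (blockA n \<times> blockA n)"
    by (intro card_mono) (auto simp: blockA_def)
  then show ?thesis by (simp add: card_cartesian_product)
qed

lemma finite_blockA[simp]: "finite (blockA n)"
  by (simp add: blockA_def)

context mainL
begin

definition Lc :: "nat \<Rightarrow> nat \<Rightarrow> real" where
  "Lc i j = - ln \<bar>c i - c j\<bar>"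

definition ns :: "real \<Rightarrow> nat \<Rightarrow> real" where
  "ns d n = (\<Sum>(i,j)\<in>{(i,j)\<in>blockA n \<times> blockA n. i \<noteq> j \<and> \<bar>c i - c j\<bar> < d}. - ln \<bar>c i - c j\<bar>)"

lemma Lc_nonneg: "Lc i j \<ge> 0"
proof -
  have "\<bar>c i - c j\<bar> \<le> 1" using c_in[of i] c_in[of j] by auto
  then show ?thesis unfolding Lc_def
    by (cases "c i = c j") (auto simp: ln_le_zero_iff)
qed

lemma Lc_Lam: "Lam (c i, c j) = Lc i j"
  unfolding Lam_def Lc_def by simp

lemma ns_nonneg: "ns d n \<ge> 0"
  unfolding ns_def using Lc_nonneg unfolding Lc_def by (intro sum_nonneg) auto

lemma ns_mono:
  assumes "d' \<le> d" shows "ns d' n \<le> ns d n"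
  unfolding ns_def
proof (rule sum_mono2)
  show "finite {(i,j)\<in>blockA n \<times> blockA n. i \<noteq> j \<and> \<bar>c i - c j\<bar> < d}"
    by (rule finite_pairs) simp
  show "{(i,j)\<in>blockA n \<times> blockA n. i \<noteq> j \<and> \<bar>c i - c j\<bar> < d'} \<subseteq> {(i,j)\<in>blockA n \<times> blockA n. i \<noteq> j \<and> \<bar>c i - c j\<bar> < d}"
    using assms by auto
qed (use Lc_nonneg in \<open>auto simp: Lc_def\<close>)

lemma ns_as_sum: "ns d n = (\<Sum>(i,j)\<in>{(i,j)\<in>blockA n \<times> blockA n. i \<noteq> j}. if \<bar>c i - c j\<bar> < d then Lc i j else 0)"
proof -
  have "{(i,j)\<in>blockA n \<times> blockA n. i \<noteq> j \<and> \<bar>c i - c j\<bar> < d} =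
        {p \<in> {(i,j)\<in>blockA n \<times> blockA n. i \<noteq> j}. \<bar>c (fst p) - c (snd p)\<bar> < d}" by auto
  then have "ns d n = (\<Sum>p\<in>{p \<in> {(i,j)\<in>blockA n \<times> blockA n. i \<noteq> j}. \<bar>c (fst p) - c (snd p)\<bar> < d}. Lc (fst p) (snd p))"
    unfolding ns_def Lc_def by (simp add: split_beta)
  also have "\<dots> = (\<Sum>p\<in>{(i,j)\<in>blockA n \<times> blockA n. i \<noteq> j}. if \<bar>c (fst p) - c (snd p)\<bar> < d then Lc (fst p) (snd p) else 0)"
    by (rule sum.inter_filter) (rule finite_pairs, simp)
  finally show ?thesis by (simp add: split_beta)
qed

lemma Lc_far: "0 < d \<Longrightarrow> d \<le> \<bar>c i - c j\<bar> \<Longrightarrow> Lc i j \<le> - ln d"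
  unfolding Lc_def by simp

lemma E1:
  assumes e: "0 < e" "e \<le> 1/2"
    and A3n: "\<forall>i\<in>blockA n. \<forall>j\<in>blockA n. i \<noteq> j \<longrightarrow> l i + l j < e * (2 * \<bar>c i - c j\<bar>)"
  shows "\<bar>(\<Sum>p\<in>{(i,j)\<in>blockA n \<times> blockA n. i \<noteq> j}. log_energy (mu (fst p)) (mu (snd p)))
          - (\<Sum>p\<in>{(i,j)\<in>blockA n \<times> blockA n. i \<noteq> j}. Lc (fst p) (snd p) * a (fst p) * a (snd p))\<bar>
         \<le> real n ^ 2 * (2 * e * M * M)"
proof -
  define D where "D = {(i,j)\<in>blockA n \<times> blockA n. i \<noteq> j}"
  define F where "F p = log_energy (mu (fst p)) (mu (snd p)) - Lc (fst p) (snd p) * a (fst p) * a (snd p)" for p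
  have "\<bar>(\<Sum>p\<in>D. log_energy (mu (fst p)) (mu (snd p))) - (\<Sum>p\<in>D. Lc (fst p) (snd p) * a (fst p) * a (snd p))\<bar>
      = \<bar>\<Sum>p\<in>D. F p\<bar>"
    unfolding F_def by (simp only: sum_subtractf)
  also have "\<dots> \<le> (\<Sum>p\<in>D. \<bar>F p\<bar>)" by (rule sum_abs)
  also have "\<dots> \<le> (\<Sum>p\<in>D. 2 * e * M * M)"
  proof (rule sum_mono)
    fix p assume "p \<in> D"
    then obtain i j where p: "p = (i,j)" "i \<in> blockA n" "j \<in> blockA n" "i \<noteq> j" unfolding D_def by auto
    then have "l i + l j < e * (2 * \<bar>c i - c j\<bar>)" using A3n by blast
    from pair_est[OF e this] show "\<bar>F p\<bar> \<le> 2 * e * M * M"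
      using p unfolding F_def by (simp add: Lc_Lam)
  qed
  also have "\<dots> = real (card D) * (2 * e * M * M)" by simp
  also have "\<dots> \<le> real n ^ 2 * (2 * e * M * M)"
  proof (rule mult_right_mono)
    have "card D \<le> n * n" using card_offdiag_le[of n] unfolding D_def .
    then have "real (card D) \<le> real (n * n)" by (simp only: of_nat_le_iff)
    then show "real (card D) \<le> real n ^ 2" by (simp add: power2_eq_square)
    show "0 \<le> 2 * e * M * M" using e M_nonneg by simp
  qed
  finally show ?thesis unfolding D_def .
qed

end

context mainL
begin

lemma f_c_bound: "\<bar>f (c i)\<bar> \<le> M" using fM by simp

lemma e_bound: "\<bar>a i - f (c i)\<bar> \<le> 2 * M"
  using a_bound[of i] f_c_bound[of i] by (smt (verit))

lemma prod_diff_bound: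
  "\<bar>a i * a j - f (c i) * f (c j)\<bar> \<le> M * (\<bar>a i - f (c i)\<bar> + \<bar>a j - f (c j)\<bar>)"
proof -
  have eq: "a i * a j - f (c i) * f (c j) = (a i - f (c i)) * a j + f (c i) * (a j - f (c j))"
    by (simp add: algebra_simps)
  have "\<bar>(a i - f (c i)) * a j\<bar> \<le> \<bar>a i - f (c i)\<bar> * M"
    unfolding abs_mult using a_bound[of j] by (intro mult_left_mono) auto
  moreover have "\<bar>f (c i) * (a j - f (c j))\<bar> \<le> M * \<bar>a j - f (c j)\<bar>"
    unfolding abs_mult using f_c_bound[of i] by (intro mult_right_mono) auto
  ultimately show ?thesis unfolding eq
    by (smt (verit, best) abs_triangle_ineq distrib_left mult.commute)
qed

lemma sum_pairs_add:
  fixes w :: "nat \<Rightarrow> real"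
  shows "(\<Sum>p\<in>blockA n \<times> blockA n. w (fst p) + w (snd p)) = 2 * real n * (\<Sum>i\<in>blockA n. w i)"
proof -
  have "(\<Sum>p\<in>blockA n \<times> blockA n. w (fst p) + w (snd p)) =
        (\<Sum>i\<in>blockA n. \<Sum>j\<in>blockA n. w i + w j)"
    by (simp add: sum.cartesian_product split_beta)
  also have "\<dots> = (\<Sum>i\<in>blockA n. real n * w i + (\<Sum>j\<in>blockA n. w j))"
    by (simp add: sum.distrib)
  also have "\<dots> = 2 * real n * (\<Sum>i\<in>blockA n. w i)"
    by (simp add: sum.distrib sum_distrib_left mult.assoc)
  finally show ?thesis .
qed

lemma E2:
  assumes d: "0 < d" "d \<le> 1"
  shows "\<bar>(\<Sum>p\<in>{(i,j)\<in>blockA n \<times> blockA n. i \<noteq> j}. Lc (fst p) (snd p) * a (fst p) * a (snd p))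
          - (\<Sum>p\<in>{(i,j)\<in>blockA n \<times> blockA n. i \<noteq> j}. Lc (fst p) (snd p) * f (c (fst p)) * f (c (snd p)))\<bar>
         \<le> M * (4 * M * ns d n + 2 * (- ln d) * real n * (\<Sum>i\<in>blockA n. \<bar>a i - f (c i)\<bar>))"
proof -
  define D where "D = {(i,j)\<in>blockA n \<times> blockA n. i \<noteq> j}"
  define ee where "ee i = \<bar>a i - f (c i)\<bar>" for i
  define nr where "nr p = (if \<bar>c (fst p) - c (snd p)\<bar> < d then Lc (fst p) (snd p) else 0)" for p
  have lnd: "- ln d \<ge> 0" using d by simp
  have fin: "finite D" unfolding D_def by (rule finite_pairs) simp
  have ee0: "ee i \<ge> 0" for i unfolding ee_def by simp
  have "\<bar>(\<Sum>p\<in>D. Lc (fst p) (snd p) * a (fst p) * a (snd p)) - (\<Sum>p\<in>D. Lc (fst p) (snd p) * f (c (fst p)) * f (c (snd p)))\<bar>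
      = \<bar>\<Sum>p\<in>D. Lc (fst p) (snd p) * (a (fst p) * a (snd p) - f (c (fst p)) * f (c (snd p)))\<bar>"
    by (simp only: sum_subtractf[symmetric] right_diff_distrib mult.assoc)
  also have "\<dots> \<le> (\<Sum>p\<in>D. \<bar>Lc (fst p) (snd p) * (a (fst p) * a (snd p) - f (c (fst p)) * f (c (snd p)))\<bar>)"
    by (rule sum_abs)
  also have "\<dots> \<le> (\<Sum>p\<in>D. M * (4 * M * nr p + (- ln d) * (ee (fst p) + ee (snd p))))"
  proof (rule sum_mono)
    fix p assume "p \<in> D"
    obtain i j where p: "p = (i,j)" by (cases p)
    have L0: "Lc i j \<ge> 0" by (rule Lc_nonneg)
    have "\<bar>Lc i j * (a i * a j - f (c i) * f (c j))\<bar> = Lc i j * \<bar>a i * a j - f (c i) * f (c j)\<bar>"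
      using L0 by (simp add: abs_mult)
    also have "\<dots> \<le> Lc i j * (M * (ee i + ee j))"
      using prod_diff_bound[of i j] L0 unfolding ee_def by (intro mult_left_mono) auto
    also have "\<dots> \<le> M * (4 * M * nr p + (- ln d) * (ee i + ee j))"
    proof (cases "\<bar>c i - c j\<bar> < d")
      case True
      then have nrp: "nr p = Lc i j" unfolding nr_def p by simp
      have "ee i + ee j \<le> 4 * M" using e_bound[of i] e_bound[of j] unfolding ee_def by simp
      then have "Lc i j * (ee i + ee j) \<le> Lc i j * (4 * M)" using L0 by (intro mult_left_mono) auto
      moreover have "0 \<le> (- ln d) * (ee i + ee j)" using lnd ee0[of i] ee0[of j] by (intro mult_nonneg_nonneg) auto
      ultimately have "Lc i j * (ee i + ee j) \<le> 4 * M * nr p + (- ln d) * (ee i + ee j)"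
        unfolding nrp by (simp add: algebra_simps)
      then have "M * (Lc i j * (ee i + ee j)) \<le> M * (4 * M * nr p + (- ln d) * (ee i + ee j))"
        using M_nonneg by (intro mult_left_mono) auto
      then show ?thesis by (simp add: algebra_simps)
    next
      case False
      then have nrp: "nr p = 0" unfolding nr_def p by simp
      have "Lc i j \<le> - ln d" using Lc_far[of d i j] d False by simp
      then have "Lc i j * (ee i + ee j) \<le> (- ln d) * (ee i + ee j)" using ee0
        by (intro mult_right_mono) (auto simp: add_nonneg_nonneg)
      then have "M * (Lc i j * (ee i + ee j)) \<le> M * ((- ln d) * (ee i + ee j))"
        using M_nonneg by (intro mult_left_mono) auto
      then show ?thesis using nrp by (simp add: algebra_simps)
    qed
    finally show "\<bar>Lc (fst p) (snd p) * (a (fst p) * a (snd p) - f (c (fst p)) * f (c (snd p)))\<bar>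
        \<le> M * (4 * M * nr p + (- ln d) * (ee (fst p) + ee (snd p)))" using p by simp
  qed
  also have "\<dots> = M * (\<Sum>p\<in>D. 4 * M * nr p + (- ln d) * (ee (fst p) + ee (snd p)))"
    by (rule sum_distrib_left[symmetric])
  also have "\<dots> = M * ((\<Sum>p\<in>D. 4 * M * nr p) + (\<Sum>p\<in>D. (- ln d) * (ee (fst p) + ee (snd p))))"
    by (simp only: sum.distrib)
  also have "\<dots> = M * (4 * M * (\<Sum>p\<in>D. nr p) + (- ln d) * (\<Sum>p\<in>D. ee (fst p) + ee (snd p)))"
    by (simp only: sum_distrib_left)
  also have "\<dots> \<le> M * (4 * M * ns d n + 2 * (- ln d) * real n * (\<Sum>i\<in>blockA n. ee i))"
  proof -
    have "(\<Sum>p\<in>D. nr p) = ns d n" unfolding ns_as_sum D_def nr_def by (simp add: split_beta)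
    have "(\<Sum>p\<in>D. ee (fst p) + ee (snd p)) \<le> (\<Sum>p\<in>blockA n \<times> blockA n. ee (fst p) + ee (snd p))"
      by (rule sum_mono2) (auto simp: D_def ee0 add_nonneg_nonneg)
    then have "(\<Sum>p\<in>D. ee (fst p) + ee (snd p)) \<le> 2 * real n * (\<Sum>i\<in>blockA n. ee i)"
      using sum_pairs_add[of ee n] by simp
    then have "(- ln d) * (\<Sum>p\<in>D. ee (fst p) + ee (snd p)) \<le> (- ln d) * (2 * real n * (\<Sum>i\<in>blockA n. ee i))"
      using lnd by (rule mult_left_mono)
    then have "4 * M * (\<Sum>p\<in>D. nr p) + (- ln d) * (\<Sum>p\<in>D. ee (fst p) + ee (snd p))
        \<le> 4 * M * ns d n + 2 * (- ln d) * real n * (\<Sum>i\<in>blockA n. ee i)"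
      using \<open>(\<Sum>p\<in>D. nr p) = ns d n\<close> by (simp add: algebra_simps)
    then show ?thesis using M_nonneg by (rule mult_left_mono)
  qed
  finally show ?thesis unfolding D_def ee_def .
qed

end

context mainL
begin

lemma Kd_diag: "Kd d (x, x) = - ln d" if "d > 0" for x
  using that unfolding Kd_def by simp

lemma Kd_le_Lc: "c i \<noteq> c j \<Longrightarrow> Kd d (c i, c j) \<le> Lc i j"
  unfolding Kd_def Lc_def by (auto intro!: ln_mono)

lemma Kd_Lc_diff: assumes "c i \<noteq> c j" "0 < d" "d \<le> 1"
  shows "\<bar>Lc i j - Kd d (c i, c j)\<bar> \<le> (if \<bar>c i - c j\<bar> < d then Lc i j else 0)"
proof (cases "\<bar>c i - c j\<bar> < d")
  case True
  have "Kd d (c i, c j) = - ln d" using True unfolding Kd_def by (simp add: max_def)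
  moreover have "- ln d \<le> Lc i j" using True assms unfolding Lc_def by (auto intro!: ln_mono)
  moreover have "0 \<le> - ln d" using assms by simp
  ultimately show ?thesis using True by simp
next
  case False
  then have "Kd d (c i, c j) = Lc i j" using Kd_eq[of d "(c i, c j)"] Lc_Lam by simp
  then show ?thesis using False by simp
qed

lemma E3:
  assumes dist: "\<forall>i\<in>blockA n. \<forall>j\<in>blockA n. i \<noteq> j \<longrightarrow> c i \<noteq> c j" and d: "0 < d" "d \<le> 1"
  shows "\<bar>(\<Sum>p\<in>{(i,j)\<in>blockA n \<times> blockA n. i \<noteq> j}. Lc (fst p) (snd p) * f (c (fst p)) * f (c (snd p)))
          - (\<Sum>p\<in>blockA n \<times> blockA n. Kd d (c (fst p), c (snd p)) * f (c (fst p)) * f (c (snd p)))\<bar>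
         \<le> M * M * ns d n + real n * (- ln d) * (M * M)"
proof -
  define D where "D = {(i,j)\<in>blockA n \<times> blockA n. i \<noteq> j}"
  define g where "g p = Kd d (c (fst p), c (snd p)) * f (c (fst p)) * f (c (snd p))" for p
  define nr where "nr p = (if \<bar>c (fst p) - c (snd p)\<bar> < d then Lc (fst p) (snd p) else 0)" for p
  have split: "(\<Sum>p\<in>blockA n \<times> blockA n. g p) = (\<Sum>p\<in>D. g p) + (\<Sum>i\<in>blockA n. g (i,i))"
    unfolding D_def by (rule sum_offdiag) simp
  have ff: "\<bar>f (c i) * f (c j)\<bar> \<le> M * M" for i j
    unfolding abs_mult using f_c_bound M_nonneg by (intro mult_mono) auto
  have A: "\<bar>(\<Sum>p\<in>D. Lc (fst p) (snd p) * f (c (fst p)) * f (c (snd p))) - (\<Sum>p\<in>D. g p)\<bar> \<le> M * M * ns d n"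
  proof -
    have "\<bar>(\<Sum>p\<in>D. Lc (fst p) (snd p) * f (c (fst p)) * f (c (snd p))) - (\<Sum>p\<in>D. g p)\<bar>
        = \<bar>\<Sum>p\<in>D. (Lc (fst p) (snd p) - Kd d (c (fst p), c (snd p))) * (f (c (fst p)) * f (c (snd p)))\<bar>"
      unfolding g_def by (simp only: sum_subtractf[symmetric] left_diff_distrib mult.assoc)
    also have "\<dots> \<le> (\<Sum>p\<in>D. \<bar>(Lc (fst p) (snd p) - Kd d (c (fst p), c (snd p))) * (f (c (fst p)) * f (c (snd p)))\<bar>)"
      by (rule sum_abs)
    also have "\<dots> \<le> (\<Sum>p\<in>D. nr p * (M * M))"
    proof (rule sum_mono)
      fix p assume "p \<in> D"
      then obtain i j where p: "p = (i,j)" "i \<in> blockA n" "j \<in> blockA n" "i \<noteq> j" unfolding D_def by auto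
      then have cij: "c i \<noteq> c j" using dist by blast
      have "\<bar>(Lc i j - Kd d (c i, c j)) * (f (c i) * f (c j))\<bar> \<le> nr p * (M * M)"
        unfolding abs_mult p(1) nr_def
        using Kd_Lc_diff[OF cij d] f_c_bound[of i] f_c_bound[of j] M_nonneg by (intro mult_mono) (auto simp: Lc_nonneg)
      then show "\<bar>(Lc (fst p) (snd p) - Kd d (c (fst p), c (snd p))) * (f (c (fst p)) * f (c (snd p)))\<bar> \<le> nr p * (M * M)"
        using p by simp
    qed
    also have "\<dots> = M * M * ns d n"
    proof -
      have "(\<Sum>p\<in>D. nr p) = ns d n" unfolding ns_as_sum D_def nr_def by (simp add: split_beta)
      then show ?thesis by (simp add: sum_distrib_right[symmetric] mult.commute)
    qed
    finally show ?thesis .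
  qed
  have B: "\<bar>\<Sum>i\<in>blockA n. g (i,i)\<bar> \<le> real n * (- ln d) * (M * M)"
  proof -
    have "\<bar>\<Sum>i\<in>blockA n. g (i,i)\<bar> \<le> (\<Sum>i\<in>blockA n. \<bar>g (i,i)\<bar>)" by (rule sum_abs)
    also have "\<dots> \<le> (\<Sum>i\<in>blockA n. (- ln d) * (M * M))"
    proof (rule sum_mono)
      fix i
      have "\<bar>g (i,i)\<bar> = (- ln d) * \<bar>f (c i) * f (c i)\<bar>"
        unfolding g_def using d by (simp add: Kd_diag abs_mult)
      also have "\<dots> \<le> (- ln d) * (M * M)" using ff[of i i] d by (intro mult_left_mono) auto
      finally show "\<bar>g (i,i)\<bar> \<le> (- ln d) * (M * M)" .
    qed
    also have "\<dots> = real n * (- ln d) * (M * M)" by simp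
    finally show ?thesis .
  qed
  have "\<bar>(\<Sum>p\<in>D. Lc (fst p) (snd p) * f (c (fst p)) * f (c (snd p))) - (\<Sum>p\<in>blockA n \<times> blockA n. g p)\<bar>
      \<le> M * M * ns d n + real n * (- ln d) * (M * M)"
    unfolding split using A B by linarith
  then show ?thesis unfolding D_def g_def .
qed

lemma dist_ev: "\<forall>\<^sub>F n in sequentially. \<forall>i\<in>blockA n. \<forall>j\<in>blockA n. i \<noteq> j \<longrightarrow> c i \<noteq> c j"
  using A3[OF zero_less_one]
proof eventually_elim
  case (elim n)
  show ?case
  proof (intro ballI impI)
    fix i j assume "i \<in> blockA n" "j \<in> blockA n" "i \<noteq> j"
    then have "l i + l j < 1 * (2 * \<bar>c i - c j\<bar>)" using elim by blast
    then show "c i \<noteq> c j" using l_pos[of i] l_pos[of j] by auto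
  qed
qed

lemma Sn_eq: "Sn G n = (\<Sum>p\<in>blockA n \<times> blockA n. G (c (fst p), c (snd p))) / real n ^ 2"
  unfolding Sn_def by (simp add: split_beta)

lemma energy_bound: "\<exists>C. \<forall>d. 0 < d \<longrightarrow> d < 1 \<longrightarrow> T (Kd d) \<le> C"
proof -
  obtain d0 where d0: "d0 > 0" and ev0: "\<forall>\<^sub>F n in sequentially.
        (\<Sum>(i,j)\<in>{(i,j)\<in>blockA n \<times> blockA n. i \<noteq> j \<and> \<bar>c i - c j\<bar> < d0}. - ln \<bar>c i - c j\<bar>)
          / real (card (blockA n \<times> blockA n)) < 1"
    using A2[of 1] by auto
  define d1 where "d1 = min d0 (1/2)"
  have d1: "0 < d1" "d1 \<le> 1" "d1 \<le> d0" unfolding d1_def using d0 by auto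
  have ev1: "\<forall>\<^sub>F n in sequentially. ns d1 n \<le> real n ^ 2"
    using ev0 eventually_gt_at_top[of 0]
  proof eventually_elim
    case (elim n)
    then have "ns d0 n < real n ^ 2"
      unfolding ns_def by (simp add: card_cartesian_product power2_eq_square divide_less_eq)
    then show ?case using ns_mono[OF d1(3), of n] by simp
  qed
  show ?thesis
  proof (intro exI allI impI)
    fix d :: real assume d: "0 < d" "d < 1"
    have lim1: "(\<lambda>n. Sn (Kd d) n) \<longlonglongrightarrow> T (Kd d)" by (rule equid2[OF Kd_cont[OF d(1)]])
    have lim2: "(\<lambda>n. 1 + (- ln d1) + (- ln d) / real n) \<longlonglongrightarrow> 1 + (- ln d1) + 0"
      by (intro tendsto_add tendsto_const) real_asymp
    have ev: "\<forall>\<^sub>F n in sequentially. Sn (Kd d) n \<le> 1 + (- ln d1) + (- ln d) / real n"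
      using ev1 dist_ev eventually_gt_at_top[of 0]
    proof eventually_elim
      case (elim n)
      define D where "D = {(i,j)\<in>blockA n \<times> blockA n. i \<noteq> j}"
      define K where "K p = Kd d (c (fst p), c (snd p))" for p
      define nr where "nr p = (if \<bar>c (fst p) - c (snd p)\<bar> < d1 then Lc (fst p) (snd p) else 0)" for p
      have split: "(\<Sum>p\<in>blockA n \<times> blockA n. K p) = (\<Sum>p\<in>D. K p) + (\<Sum>i\<in>blockA n. K (i,i))"
        unfolding D_def by (rule sum_offdiag) simp
      have diag: "(\<Sum>i\<in>blockA n. K (i,i)) = real n * (- ln d)"
        unfolding K_def using d by (simp add: Kd_diag)
      have "(\<Sum>p\<in>D. K p) \<le> (\<Sum>p\<in>D. nr p + (- ln d1))"
      proof (rule sum_mono)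
        fix p assume "p \<in> D"
        then obtain i j where p: "p = (i,j)" "i \<in> blockA n" "j \<in> blockA n" "i \<noteq> j" unfolding D_def by auto
        then have cij: "c i \<noteq> c j" using elim(2) by blast
        have "K p \<le> Lc i j" unfolding K_def p(1) using Kd_le_Lc[OF cij] by simp
        also have "\<dots> \<le> nr p + (- ln d1)"
        proof (cases "\<bar>c i - c j\<bar> < d1")
          case True then show ?thesis unfolding nr_def p(1) using d1 by simp
        next
          case False then show ?thesis unfolding nr_def p(1) using Lc_far[of d1 i j] d1 by simp
        qed
        finally show "K p \<le> nr p + (- ln d1)" .
      qed
      also have "\<dots> = ns d1 n + real (card D) * (- ln d1)"
      proof -
        have "(\<Sum>p\<in>D. nr p) = ns d1 n" unfolding ns_as_sum D_def nr_def by (simp add: split_beta)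
        then show ?thesis by (simp add: sum_subtractf)
      qed
      also have "\<dots> \<le> real n ^ 2 + real n ^ 2 * (- ln d1)"
      proof -
        have "card D \<le> n * n" using card_offdiag_le[of n] unfolding D_def .
        then have "real (card D) \<le> real n ^ 2" by (simp add: power2_eq_square flip: of_nat_mult)
        then have "real (card D) * (- ln d1) \<le> real n ^ 2 * (- ln d1)"
          using d1 by (intro mult_right_mono) auto
        then show ?thesis using elim(1) by linarith
      qed
      finally have "(\<Sum>p\<in>blockA n \<times> blockA n. K p) \<le> real n ^ 2 + real n ^ 2 * (- ln d1) + real n * (- ln d)"
        using split diag by linarith
      then have "(\<Sum>p\<in>blockA n \<times> blockA n. K p) / real n ^ 2 \<le> (real n ^ 2 + real n ^ 2 * (- ln d1) + real n * (- ln d)) / real n ^ 2"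
        by (rule divide_right_mono) simp
      also have "\<dots> = 1 + (- ln d1) + (- ln d) / real n"
        using elim(3) by (simp add: field_simps power2_eq_square)
      finally show ?case unfolding Sn_eq K_def .
    qed
    have "T (Kd d) \<le> 1 + (- ln d1) + 0"
      by (rule LIMSEQ_le[OF lim1 lim2]) (use ev in \<open>auto simp: eventually_sequentially\<close>)
    then show "T (Kd d) \<le> 1 + (- ln d1)" by simp
  qed
qed

end

lemma div_helper:
  fixes A B K :: real
  assumes "n > 0" "\<bar>A - B\<bar> \<le> real n ^ 2 * K"
  shows "\<bar>A / real n ^ 2 - B / real n ^ 2\<bar> \<le> K"
proof -
  have pos: "real n ^ 2 > 0" using assms(1) by simp
  have "\<bar>A / real n ^ 2 - B / real n ^ 2\<bar> = \<bar>A - B\<bar> / real n ^ 2"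
    using pos by (simp add: diff_divide_distrib[symmetric])
  also have "\<dots> \<le> K" using assms(2) pos by (simp add: divide_le_eq mult.commute)
  finally show ?thesis .
qed

context mainL
begin

lemma E4:
  assumes ie: "integrable (lborel \<Otimes>\<^sub>M lborel) (\<lambda>(x,y). Lam (x,y) * \<Phi> x * \<Phi> y)"
    and d: "0 < d" "d \<le> 1"
  shows "\<bar>T (\<lambda>z. Kd d z * f (fst z) * f (snd z)) - T (\<lambda>z. Lam z * f (fst z) * f (snd z))\<bar>
          \<le> M * M * (T Lam - T (Kd d))"
proof -
  let ?P = "lborel \<Otimes>\<^sub>M lborel"
  define h0 where "h0 = (\<lambda>(x,y). Lam (x,y) * f x * f y * \<Phi> x * \<Phi> y)"
  define hd where "hd = (\<lambda>(x,y). Kd d (x,y) * f x * f y * \<Phi> x * \<Phi> y)"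
  define l0 where "l0 = (\<lambda>(x,y). Lam (x,y) * \<Phi> x * \<Phi> y)"
  define ld where "ld = (\<lambda>(x,y). Kd d (x,y) * \<Phi> x * \<Phi> y)"
  have Phim: "\<Phi> \<in> borel_measurable lborel" using \<Phi>int by auto
  have ild: "integrable ?P ld" unfolding ld_def by (rule T_integrable[OF Kd_cont[OF d(1)]])
  have il0: "integrable ?P l0" unfolding l0_def by (rule ie)
  have Kdc: "continuous_on UNIV (\<lambda>z. Kd d z * f (fst z) * f (snd z))"
    using Kd_cont[OF d(1)] f_cont by (intro continuous_on_mult continuous_on_compose2[OF f_cont]) (auto intro: continuous_intros)
  have ihd: "integrable ?P hd" unfolding hd_def
    using T_integrable[OF Kdc] by (simp add: split_beta)
  have h0m: "h0 \<in> borel_measurable ?P" unfolding h0_def using Lam_meas f_meas Phim by measurable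
  have key: "\<Phi> x * \<Phi> y \<noteq> 0 \<Longrightarrow> x \<noteq> y \<Longrightarrow> 0 \<le> Kd d (x,y) \<and> Kd d (x,y) \<le> Lam (x,y)" for x y
  proof -
    assume "\<Phi> x * \<Phi> y \<noteq> 0" "x \<noteq> y"
    then have xy: "x \<in> {0..1}" "y \<in> {0..1}" using Phi_nz by auto
    show "0 \<le> Kd d (x,y) \<and> Kd d (x,y) \<le> Lam (x,y)"
      using Kd_nonneg[OF d, of "(x,y)"] xy \<open>x \<noteq> y\<close> unfolding Kd_def Lam_def by (auto intro!: ln_mono)
  qed
  have ffb: "\<bar>f x * f y\<bar> \<le> M * M" for x y
    unfolding abs_mult using fM M_nonneg by (intro mult_mono) auto
  have PP: "\<Phi> x * \<Phi> y \<ge> 0" for x y using \<Phi>nn by simp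
  have ih0: "integrable ?P h0"
  proof (rule Bochner_Integration.integrable_bound[OF integrable_mult_right[OF il0, of "M * M"] h0m])
    show "AE z in ?P. norm (h0 z) \<le> norm (M * M * l0 z)"
      using AE_offdiag
    proof eventually_elim
      case (elim z)
      obtain x y where z: "z = (x,y)" by (cases z)
      show ?case
      proof (cases "\<Phi> x * \<Phi> y = 0")
        case True then show ?thesis unfolding z h0_def l0_def by (cases "\<Phi> x = 0") auto
      next
        case False
        then have L: "0 \<le> Lam (x,y)" using key[OF False] elim z by force
        have "\<bar>h0 z\<bar> = Lam (x,y) * \<bar>f x * f y\<bar> * (\<Phi> x * \<Phi> y)"
          unfolding z h0_def using L PP[of x y] \<Phi>nn[of x] \<Phi>nn[of y] by (simp add: abs_mult mult_ac)
        also have "\<dots> \<le> Lam (x,y) * (M * M) * (\<Phi> x * \<Phi> y)"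
          using L PP[of x y] ffb[of x y] by (intro mult_right_mono mult_left_mono) auto
        also have "\<dots> = \<bar>M * M * l0 z\<bar>"
          unfolding z l0_def using L PP[of x y] \<Phi>nn[of x] \<Phi>nn[of y] by (simp add: abs_mult mult_ac)
        finally show ?thesis by simp
      qed
    qed
  qed
  have T0: "T (\<lambda>z. Lam z * f (fst z) * f (snd z)) = integral\<^sup>L ?P h0"
    unfolding T_def h0_def by (simp add: split_beta)
  have Td: "T (\<lambda>z. Kd d z * f (fst z) * f (snd z)) = integral\<^sup>L ?P hd"
    unfolding T_def hd_def by (simp add: split_beta)
  have TL: "T Lam = integral\<^sup>L ?P l0" unfolding T_def l0_def by simp
  have TK: "T (Kd d) = integral\<^sup>L ?P ld" unfolding T_def ld_def by simp
  have "\<bar>integral\<^sup>L ?P hd - integral\<^sup>L ?P h0\<bar> = \<bar>integral\<^sup>L ?P (\<lambda>z. hd z - h0 z)\<bar>"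
    using Bochner_Integration.integral_diff[OF ihd ih0] by simp
  also have "\<dots> \<le> integral\<^sup>L ?P (\<lambda>z. \<bar>hd z - h0 z\<bar>)" by (rule integral_abs_bound)
  also have "\<dots> \<le> integral\<^sup>L ?P (\<lambda>z. M * M * (l0 z - ld z))"
  proof (rule integral_mono_AE)
    show "integrable ?P (\<lambda>z. \<bar>hd z - h0 z\<bar>)" using ihd ih0 by auto
    show "integrable ?P (\<lambda>z. M * M * (l0 z - ld z))" using il0 ild by auto
    show "AE z in ?P. \<bar>hd z - h0 z\<bar> \<le> M * M * (l0 z - ld z)"
      using AE_offdiag
    proof eventually_elim
      case (elim z)
      obtain x y where z: "z = (x,y)" by (cases z)
      show ?case
      proof (cases "\<Phi> x * \<Phi> y = 0")
        case True then show ?thesis unfolding z hd_def h0_def l0_def ld_def by (cases "\<Phi> x = 0") auto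
      next
        case False
        have xy: "x \<noteq> y" using elim z by simp
        have K: "0 \<le> Lam (x,y) - Kd d (x,y)" using key[OF False xy] by simp
        have "\<bar>hd z - h0 z\<bar> = (Lam (x,y) - Kd d (x,y)) * \<bar>f x * f y\<bar> * (\<Phi> x * \<Phi> y)"
          unfolding z hd_def h0_def using K PP[of x y] \<Phi>nn[of x] \<Phi>nn[of y]
          by (simp add: abs_mult mult_ac left_diff_distrib[symmetric] abs_minus_commute
               flip: right_diff_distrib)
        also have "\<dots> \<le> (Lam (x,y) - Kd d (x,y)) * (M * M) * (\<Phi> x * \<Phi> y)"
          using K PP[of x y] ffb[of x y] by (intro mult_right_mono mult_left_mono) auto
        also have "\<dots> = M * M * (l0 z - ld z)"
          unfolding z l0_def ld_def by (simp add: algebra_simps)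
        finally show ?thesis .
      qed
    qed
  qed
  also have "\<dots> = M * M * (integral\<^sup>L ?P l0 - integral\<^sup>L ?P ld)"
    using Bochner_Integration.integral_diff[OF il0 ild] by simp
  finally show ?thesis unfolding T0 Td TL TK .
qed

end

context mainL
begin

theorem core:
  "(\<lambda>n. (\<Sum>p\<in>{(i,j)\<in>blockA n \<times> blockA n. i \<noteq> j}. log_energy (mu (fst p)) (mu (snd p))) / real n ^ 2)
     \<longlonglongrightarrow> T (\<lambda>z. Lam z * f (fst z) * f (snd z))"
proof (rule conv_crit[where C = "8 * M * M + 2 * M + 2"])
  fix e :: real assume e: "e > 0"
  obtain C where C: "\<And>d. 0 < d \<Longrightarrow> d < 1 \<Longrightarrow> T (Kd d) \<le> C" using energy_bound by blast
  note EC = energy_conv[OF \<Phi>nn C]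
  obtain d0 where d0: "d0 > 0" and ev0: "\<forall>\<^sub>F n in sequentially.
        (\<Sum>(i,j)\<in>{(i,j)\<in>blockA n \<times> blockA n. i \<noteq> j \<and> \<bar>c i - c j\<bar> < d0}. - ln \<bar>c i - c j\<bar>)
          / real (card (blockA n \<times> blockA n)) < e"
    using A2[OF e] by auto
  have TLe: "T Lam - e < T Lam" using e by simp
  have evm1: "\<forall>\<^sub>F m in sequentially. T Lam - e < T (Kd (1 / (real m + 2)))"
    using EC(2) TLe by (rule order_tendstoD(1))
  have "(\<lambda>m::nat. 1 / (real m + 2)) \<longlonglongrightarrow> 0" by real_asymp
  then have evm2: "\<forall>\<^sub>F m in sequentially. 1 / (real m + 2) < d0"
    using d0 by (rule order_tendstoD(2))
  from eventually_conj[OF evm1 evm2] obtain m where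
    m: "T Lam - e < T (Kd (1 / (real m + 2)))" "1 / (real m + 2) < d0"
    unfolding eventually_sequentially by blast
  define d where "d = 1 / (real m + 2)"
  have d: "0 < d" "d \<le> 1" "d < 1" unfolding d_def by (auto simp: field_simps)
  have lnd: "- ln d \<ge> 0" using d by simp
  define e' where "e' = min e (1/2)"
  have e': "0 < e'" "e' \<le> 1/2" "e' \<le> e" unfolding e'_def using e by auto
  define Gd where "Gd z = Kd d z * f (fst z) * f (snd z)" for z
  have Gdc: "continuous_on UNIV Gd"
    unfolding Gd_def using Kd_cont[OF d(1)] f_cont
    by (intro continuous_on_mult continuous_on_compose2[OF f_cont]) (auto intro: continuous_intros)
  have E4': "\<bar>T Gd - T (\<lambda>z. Lam z * f (fst z) * f (snd z))\<bar> \<le> M * M * e"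
  proof -
    have "T Lam - T (Kd d) \<le> e" using m(1) unfolding d_def by simp
    then have "M * M * (T Lam - T (Kd d)) \<le> M * M * e" using M_nonneg by (intro mult_left_mono) auto
    then show ?thesis using E4[OF EC(1) d(1) d(2)] unfolding Gd_def by linarith
  qed
  have ev_a: "\<forall>\<^sub>F n in sequentially. \<forall>i\<in>blockA n. \<forall>j\<in>blockA n. i \<noteq> j \<longrightarrow> l i + l j < e' * (2 * \<bar>c i - c j\<bar>)"
    by (rule A3[OF e'(1)])
  have ev_c: "\<forall>\<^sub>F n in sequentially. (\<Sum>i\<in>blockA n. \<bar>a i - f (c i)\<bar>) / real n < e / (1 + (- ln d))"
    using mass_lim by (rule order_tendstoD(2)) (use e lnd in simp)
  have ev_e: "\<forall>\<^sub>F n in sequentially. (- ln d) * (M * M) / real n < e"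
  proof -
    have "(\<lambda>n::nat. (- ln d) * (M * M) / real n) \<longlonglongrightarrow> 0" by real_asymp
    then show ?thesis using e by (rule order_tendstoD(2))
  qed
  have ev_f: "\<forall>\<^sub>F n in sequentially. dist (Sn Gd n) (T Gd) < e"
    using equid2[OF Gdc] e by (rule tendstoD)
  show "\<forall>\<^sub>F n in sequentially.
      \<bar>(\<Sum>p\<in>{(i,j)\<in>blockA n \<times> blockA n. i \<noteq> j}. log_energy (mu (fst p)) (mu (snd p))) / real n ^ 2
        - T (\<lambda>z. Lam z * f (fst z) * f (snd z))\<bar> \<le> (8 * M * M + 2 * M + 2) * e"
    using ev_a ev0 ev_c dist_ev ev_e ev_f eventually_gt_at_top[of 0]
  proof eventually_elim
    case (elim n)
    define D where "D = {(i,j)\<in>blockA n \<times> blockA n. i \<noteq> j}"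
    define S0 where "S0 = (\<Sum>p\<in>D. log_energy (mu (fst p)) (mu (snd p)))"
    define S1 where "S1 = (\<Sum>p\<in>D. Lc (fst p) (snd p) * a (fst p) * a (snd p))"
    define S2 where "S2 = (\<Sum>p\<in>D. Lc (fst p) (snd p) * f (c (fst p)) * f (c (snd p)))"
    define S3 where "S3 = (\<Sum>p\<in>blockA n \<times> blockA n. Kd d (c (fst p), c (snd p)) * f (c (fst p)) * f (c (snd p)))"
    define W where "W = (\<Sum>i\<in>blockA n. \<bar>a i - f (c i)\<bar>)"
    have n0: "n > 0" using elim(7) .
    have nn: "real n ^ 2 > 0" using n0 by simp
    have nsd: "ns d n \<le> e * real n ^ 2"
    proof -
      have "ns d0 n < e * real n ^ 2"
        using elim(2) nn unfolding ns_def by (simp add: card_cartesian_product power2_eq_square divide_less_eq)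
      moreover have "ns d n \<le> ns d0 n" using m(2) unfolding d_def by (intro ns_mono) simp
      ultimately show ?thesis by simp
    qed
    have ns0: "ns d n \<ge> 0" by (rule ns_nonneg)
    have b1: "\<bar>S0 / real n ^ 2 - S1 / real n ^ 2\<bar> \<le> 2 * e * M * M"
    proof (rule div_helper[OF n0])
      have "\<bar>S0 - S1\<bar> \<le> real n ^ 2 * (2 * e' * M * M)"
        using E1[OF e'(1) e'(2) elim(1)] unfolding S0_def S1_def D_def .
      also have "\<dots> \<le> real n ^ 2 * (2 * e * M * M)"
        using e' M_nonneg by (intro mult_left_mono mult_right_mono) auto
      finally show "\<bar>S0 - S1\<bar> \<le> real n ^ 2 * (2 * e * M * M)" .
    qed
    have b2: "\<bar>S1 / real n ^ 2 - S2 / real n ^ 2\<bar> \<le> (4 * M * M + 2 * M) * e"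
    proof (rule div_helper[OF n0])
      have W0: "W \<ge> 0" unfolding W_def by (simp add: sum_nonneg)
      have "W < real n * (e / (1 + (- ln d)))" using elim(3) n0 unfolding W_def by (simp add: divide_less_eq mult.commute)
      then have "(- ln d) * W \<le> (- ln d) * (real n * (e / (1 + (- ln d))))"
        using lnd by (intro mult_left_mono) auto
      also have "\<dots> = real n * e * ((- ln d) / (1 + (- ln d)))" by (simp add: field_simps)
      also have "\<dots> \<le> real n * e * 1"
      proof (rule mult_left_mono)
        have pos: "0 < 1 + (- ln d)" using lnd by linarith
        show "(- ln d) / (1 + (- ln d)) \<le> 1" by (simp only: divide_le_eq_1_pos[OF pos])
        show "0 \<le> real n * e" using e by simp
      qed
      finally have lw: "(- ln d) * W \<le> real n * e" by simp
      have "real n * ((- ln d) * W) \<le> real n * (real n * e)"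
        using lw by (intro mult_left_mono) auto
      then have "2 * (- ln d) * real n * W \<le> 2 * real n * (real n * e)"
        by (simp add: mult_ac)
      then have "4 * M * ns d n + 2 * (- ln d) * real n * W \<le> 4 * M * (e * real n ^ 2) + 2 * (real n ^ 2 * e)"
        using nsd M_nonneg by (intro add_mono mult_left_mono) (auto simp: power2_eq_square mult_ac)
      then have "M * (4 * M * ns d n + 2 * (- ln d) * real n * W) \<le> M * (4 * M * (e * real n ^ 2) + 2 * (real n ^ 2 * e))"
        using M_nonneg by (rule mult_left_mono)
      also have "\<dots> = real n ^ 2 * ((4 * M * M + 2 * M) * e)" by (simp add: algebra_simps)
      finally have "M * (4 * M * ns d n + 2 * (- ln d) * real n * W) \<le> real n ^ 2 * ((4 * M * M + 2 * M) * e)" .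
      then show "\<bar>S1 - S2\<bar> \<le> real n ^ 2 * ((4 * M * M + 2 * M) * e)"
        using E2[OF d(1) d(2), of n] unfolding S1_def S2_def D_def W_def by linarith
    qed
    have b3: "\<bar>S2 / real n ^ 2 - S3 / real n ^ 2\<bar> \<le> (M * M + 1) * e"
    proof (rule div_helper[OF n0])
      have "M * M * ns d n \<le> M * M * (e * real n ^ 2)" using nsd M_nonneg by (intro mult_left_mono) auto
      moreover have "real n * (- ln d) * (M * M) \<le> e * real n ^ 2"
      proof -
        have npos: "real n > 0" using n0 by simp
        have "(- ln d) * (M * M) < e * real n" using elim(5) by (simp only: pos_divide_less_eq[OF npos])
        then have "(- ln d) * (M * M) \<le> e * real n" by simp
        then have "real n * ((- ln d) * (M * M)) \<le> real n * (e * real n)" by (intro mult_left_mono) auto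
        then show ?thesis by (simp add: power2_eq_square mult_ac)
      qed
      ultimately have "M * M * ns d n + real n * (- ln d) * (M * M) \<le> real n ^ 2 * ((M * M + 1) * e)"
        by (simp add: algebra_simps)
      then show "\<bar>S2 - S3\<bar> \<le> real n ^ 2 * ((M * M + 1) * e)"
        using E3[OF elim(4) d(1) d(2)] unfolding S2_def S3_def D_def by linarith
    qed
    have b4: "\<bar>S3 / real n ^ 2 - T Gd\<bar> \<le> e"
    proof -
      have "Sn Gd n = S3 / real n ^ 2" unfolding Sn_eq S3_def Gd_def by simp
      then show ?thesis using elim(6) by (simp add: dist_real_def)
    qed
    have "\<bar>S0 / real n ^ 2 - T (\<lambda>z. Lam z * f (fst z) * f (snd z))\<bar>
        \<le> 2 * e * M * M + (4 * M * M + 2 * M) * e + (M * M + 1) * e + e + M * M * e"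
      using b1 b2 b3 b4 E4' by (smt (verit))
    also have "\<dots> = (8 * M * M + 2 * M + 2) * e" by (simp add: algebra_simps)
    finally show ?case unfolding S0_def D_def .
  qed
qed

end

theorem lemma4p6:
  fixes c l :: "nat \<Rightarrow> real" and f \<phi> :: "real \<Rightarrow> real"
  assumes c_range: "\<And>k. c k \<in> {0<..<1}"
    and l_pos: "\<And>k. l k > 0"
    and l_dec: "decseq l"
    and l_lim: "l \<longlonglongrightarrow> 0"
    and f_cont: "continuous_on {0..1} f"
    \<comment> \<open>(A1)\<close>
    and phi_int: "set_integrable lborel {0..1} \<phi>"
    and phi_pos: "AE x in lborel. x \<in> {0..1} \<longrightarrow> \<phi> x > 0"
    and A1: "\<And>g. continuous_on {0..1} g \<Longrightarrow>
              (\<lambda>n. (\<Sum>k\<in>blockA n. g (c k)) / real (card (blockA n)))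
                \<longlonglongrightarrow> (LINT x:{0..1}|lborel. g x * \<phi> x)"
    \<comment> \<open>(A2) and (A3), for a common sequence q(n) tending to infinity\<close>
    and A23: "\<exists>q :: nat \<Rightarrow> nat. filterlim q at_top sequentially \<and>
      (\<forall>\<epsilon>>0. \<exists>\<delta>>0. \<forall>\<^sub>F n in sequentially.
          \<forall>n' \<in> {2 ^ m * n | m. m \<le> q n}. \<forall>n'' \<in> {2 ^ m * n | m. m \<le> q n}.
            (\<Sum>(i, j) \<in> {(i, j) \<in> blockA n' \<times> blockA n''. i \<noteq> j \<and> \<bar>c i - c j\<bar> < \<delta>}.
                 - ln \<bar>c i - c j\<bar>) / real (card (blockA n' \<times> blockA n'')) < \<epsilon>) \<and>
      (\<forall>\<epsilon>>0. \<forall>\<^sub>F n in sequentially.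
          \<forall>i \<in> blockAq n (q n). \<forall>j \<in> blockAq n (q n).
            i \<noteq> j \<longrightarrow> l i + l j < \<epsilon> * (2 * \<bar>c i - c j\<bar>))"
  shows "(\<lambda>n. (\<Sum>(i, j) \<in> {(i, j) \<in> blockA n \<times> blockA n. i \<noteq> j}.
               log_energy (mu_density f (c i) (l i)) (mu_density f (c j) (l j)))
             / real (card (blockA n)) ^ 2)
         \<longlonglongrightarrow> log_energy (\<lambda>x. indicator {0..1} x * f x * \<phi> x)
                                (\<lambda>x. indicator {0..1} x * f x * \<phi> x)"
proof -
  define fe where "fe x = f (max 0 (min 1 x))" for x
  define Phi where "Phi x = \<bar>indicator {0..1} x * \<phi> x\<bar>" for x :: real
  have clamp: "max 0 (min 1 x) \<in> {0..1::real}" for x by auto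
  have fe_eq: "x \<in> {0..1} \<Longrightarrow> fe x = f x" for x unfolding fe_def by simp
  have fe_cont: "continuous_on UNIV fe"
    unfolding fe_def
    by (rule continuous_on_compose2[OF f_cont]) (auto intro!: continuous_intros)
  obtain B where B: "B \<ge> 0" "\<And>x. x \<in> {0..1} \<Longrightarrow> \<bar>fe x\<bar> \<le> B"
    using cont_bound01[OF fe_cont] by blast
  have feB: "\<bar>fe x\<bar> \<le> B" for x
  proof -
    have "fe x = fe (max 0 (min 1 x))" unfolding fe_def by simp
    then show ?thesis using B(2)[OF clamp] by simp
  qed
  have phim: "(\<lambda>x. indicator {0..1} x * \<phi> x) \<in> borel_measurable lborel"
    using phi_int unfolding set_integrable_def by (simp add: borel_measurable_integrable)
  have phiI: "integrable lborel (\<lambda>x. indicator {0..1} x * \<phi> x)"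
    using phi_int unfolding set_integrable_def by simp
  have PhiI: "integrable lborel Phi" unfolding Phi_def using phiI by auto
  have Phi_ae: "AE x in lborel. indicator {0..1} x * \<phi> x = Phi x"
    using phi_pos by eventually_elim (auto simp: Phi_def indicator_def)
  have A1': "(\<lambda>n. (\<Sum>k\<in>blockA n. g (c k)) / real n) \<longlonglongrightarrow> integral\<^sup>L lborel (\<lambda>x. g x * Phi x)"
    if g: "continuous_on UNIV g" for g
  proof -
    have lim: "(\<lambda>n. (\<Sum>k\<in>blockA n. g (c k)) / real (card (blockA n))) \<longlonglongrightarrow> (LINT x:{0..1}|lborel. g x * \<phi> x)"
      by (rule A1) (rule continuous_on_subset[OF g], simp)
    have gm: "g \<in> borel_measurable lborel" by (rule cont_meas1[OF g])
    have "(LINT x:{0..1}|lborel. g x * \<phi> x) = integral\<^sup>L lborel (\<lambda>x. g x * (indicator {0..1} x * \<phi> x))"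
      unfolding set_lebesgue_integral_def by (intro Bochner_Integration.integral_cong) (auto simp: indicator_def)
    also have "\<dots> = integral\<^sup>L lborel (\<lambda>x. g x * Phi x)"
    proof (rule integral_cong_AE)
      show "(\<lambda>x. g x * (indicator {0..1} x * \<phi> x)) \<in> borel_measurable lborel" using gm phim by measurable
      show "(\<lambda>x. g x * Phi x) \<in> borel_measurable lborel" using gm phim unfolding Phi_def by measurable
      show "AE x in lborel. g x * (indicator {0..1} x * \<phi> x) = g x * Phi x"
        using Phi_ae by eventually_elim simp
    qed
    finally show ?thesis using lim by simp
  qed
  obtain q :: "nat \<Rightarrow> nat" where
    A2q: "\<forall>\<epsilon>>0. \<exists>\<delta>>0. \<forall>\<^sub>F n in sequentially.
          \<forall>n' \<in> {2 ^ m * n | m. m \<le> q n}. \<forall>n'' \<in> {2 ^ m * n | m. m \<le> q n}.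
            (\<Sum>(i, j) \<in> {(i, j) \<in> blockA n' \<times> blockA n''. i \<noteq> j \<and> \<bar>c i - c j\<bar> < \<delta>}.
                 - ln \<bar>c i - c j\<bar>) / real (card (blockA n' \<times> blockA n'')) < \<epsilon>"
    and A3q: "\<forall>\<epsilon>>0. \<forall>\<^sub>F n in sequentially.
          \<forall>i \<in> blockAq n (q n). \<forall>j \<in> blockAq n (q n).
            i \<noteq> j \<longrightarrow> l i + l j < \<epsilon> * (2 * \<bar>c i - c j\<bar>)"
    using A23 by blast
  have nin: "n \<in> {2 ^ m * n | m. m \<le> q n}" for n by (rule CollectI, rule exI[of _ 0]) simp
  have bsub: "blockA n \<subseteq> blockAq n (q n)" for n unfolding blockAq_def by force
  interpret MM: mainL c Phi l fe B
  proof unfold_locales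
    show "c k \<in> {0..1}" for k using c_range[of k] by auto
    show "integrable lborel Phi" by (rule PhiI)
    show "x \<notin> {0..1} \<Longrightarrow> Phi x = 0" for x unfolding Phi_def by simp
    show "(\<lambda>n. (\<Sum>k\<in>blockA n. g (c k)) / real n) \<longlonglongrightarrow> integral\<^sup>L lborel (\<lambda>x. g x * Phi x)"
      if "continuous_on UNIV g" for g using A1'[OF that] .
    show "c k \<in> {0<..<1}" for k by (rule c_range)
    show "l k > 0" for k by (rule l_pos)
    show "decseq l" by (rule l_dec)
    show "l \<longlonglongrightarrow> 0" by (rule l_lim)
    show "continuous_on UNIV fe" by (rule fe_cont)
    show "\<bar>fe x\<bar> \<le> B" for x by (rule feB)
    show "Phi x \<ge> 0" for x unfolding Phi_def by simp
    show "\<exists>d>0. \<forall>\<^sub>F n in sequentially.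
        (\<Sum>(i,j)\<in>{(i,j)\<in>blockA n \<times> blockA n. i \<noteq> j \<and> \<bar>c i - c j\<bar> < d}. - ln \<bar>c i - c j\<bar>)
          / real (card (blockA n \<times> blockA n)) < e" if e0: "e > 0" for e
    proof -
      obtain d where d: "d > 0" "\<forall>\<^sub>F n in sequentially.
          \<forall>n' \<in> {2 ^ m * n | m. m \<le> q n}. \<forall>n'' \<in> {2 ^ m * n | m. m \<le> q n}.
            (\<Sum>(i, j) \<in> {(i, j) \<in> blockA n' \<times> blockA n''. i \<noteq> j \<and> \<bar>c i - c j\<bar> < d}.
                 - ln \<bar>c i - c j\<bar>) / real (card (blockA n' \<times> blockA n'')) < e"
        using A2q[rule_format, OF e0] by blast
      have "\<forall>\<^sub>F n in sequentially.
        (\<Sum>(i,j)\<in>{(i,j)\<in>blockA n \<times> blockA n. i \<noteq> j \<and> \<bar>c i - c j\<bar> < d}. - ln \<bar>c i - c j\<bar>)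
          / real (card (blockA n \<times> blockA n)) < e"
        using d(2)
      proof eventually_elim
        case (elim n)
        then show ?case using nin[of n] by blast
      qed
      then show ?thesis using d(1) by blast
    qed
    show "\<forall>\<^sub>F n in sequentially. \<forall>i\<in>blockA n. \<forall>j\<in>blockA n.
        i \<noteq> j \<longrightarrow> l i + l j < e * (2 * \<bar>c i - c j\<bar>)" if e0: "e > 0" for e
      using A3q[rule_format, OF e0]
    proof eventually_elim
      case (elim n)
      then show ?case using bsub[of n] by blast
    qed
  qed
  have mu_eq: "mu_density f (c i) (l i) = MM.mu i" for i
    unfolding MM.mu_def mu_density_def by (rule ext) (auto simp: indicator_def fe_eq)
  have lhs: "(\<Sum>(i, j) \<in> {(i, j) \<in> blockA n \<times> blockA n. i \<noteq> j}.
               log_energy (mu_density f (c i) (l i)) (mu_density f (c j) (l j)))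
             / real (card (blockA n)) ^ 2
      = (\<Sum>p\<in>{(i,j)\<in>blockA n \<times> blockA n. i \<noteq> j}. log_energy (MM.mu (fst p)) (MM.mu (snd p))) / real n ^ 2" for n
    by (simp add: mu_eq split_beta)
  define psi where "psi x = fe x * (indicator {0..1} x * \<phi> x)" for x
  define psi' where "psi' x = fe x * Phi x" for x
  have psi_eq: "(\<lambda>x. indicator {0..1} x * f x * \<phi> x) = psi"
    unfolding psi_def by (rule ext) (auto simp: indicator_def fe_eq)
  have psim: "psi \<in> borel_measurable lborel" unfolding psi_def using cont_meas1[OF fe_cont] phim by measurable
  have psim': "psi' \<in> borel_measurable lborel" unfolding psi'_def Phi_def using cont_meas1[OF fe_cont] phim by measurable
  have psi_ae: "AE x in lborel. psi x = psi' x"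
    using Phi_ae by eventually_elim (simp add: psi_def psi'_def)
  have ae2: "AE z in lborel \<Otimes>\<^sub>M lborel. psi (fst z) = psi' (fst z) \<and> psi (snd z) = psi' (snd z)"
  proof (rule pair_sigma_finite.AE_pair_measure[OF pair_lborel])
    show "{z \<in> space (lborel \<Otimes>\<^sub>M lborel). psi (fst z) = psi' (fst z) \<and> psi (snd z) = psi' (snd z)} \<in> sets (lborel \<Otimes>\<^sub>M lborel)"
      using psim psim' by measurable
    show "AE x in lborel. AE y in lborel. psi (fst (x, y)) = psi' (fst (x, y)) \<and> psi (snd (x, y)) = psi' (snd (x, y))"
      using psi_ae
    proof eventually_elim
      case (elim x)
      show ?case using psi_ae by eventually_elim (use elim in simp)
    qed
  qed
  have rhs: "log_energy (\<lambda>x. indicator {0..1} x * f x * \<phi> x) (\<lambda>x. indicator {0..1} x * f x * \<phi> x)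
      = MM.T (\<lambda>z. Lam z * fe (fst z) * fe (snd z))"
  proof -
    have "log_energy psi psi = integral\<^sup>L (lborel \<Otimes>\<^sub>M lborel) (\<lambda>(x,y). Lam (x,y) * psi x * psi y)"
      by (rule log_energy_Lam)
    also have "\<dots> = integral\<^sup>L (lborel \<Otimes>\<^sub>M lborel) (\<lambda>(x,y). Lam (x,y) * psi' x * psi' y)"
    proof (rule integral_cong_AE)
      show "(\<lambda>(x,y). Lam (x,y) * psi x * psi y) \<in> borel_measurable (lborel \<Otimes>\<^sub>M lborel)"
        using Lam_meas psim by measurable
      show "(\<lambda>(x,y). Lam (x,y) * psi' x * psi' y) \<in> borel_measurable (lborel \<Otimes>\<^sub>M lborel)"
        using Lam_meas psim' by measurable
      show "AE z in lborel \<Otimes>\<^sub>M lborel. (case z of (x,y) \<Rightarrow> Lam (x,y) * psi x * psi y) = (case z of (x,y) \<Rightarrow> Lam (x,y) * psi' x * psi' y)"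
        using ae2 by eventually_elim (auto split: prod.splits)
    qed
    also have "\<dots> = MM.T (\<lambda>z. Lam z * fe (fst z) * fe (snd z))"
      unfolding MM.T_def psi'_def by (intro Bochner_Integration.integral_cong refl) (auto simp: mult_ac)
    finally show ?thesis unfolding psi_eq .
  qed
  show ?thesis unfolding lhs rhs by (rule MM.core)
qed


end
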